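(* Let $Q_\bullet=(Q_k)_{k\ge0}$ be a weakly increasing Markov chain on $\{1,2,\dots\}$ (i.e. transition matrix $(p_{i,j})$ with $p_{i,j}=0$ for $j<i$), with initial distribution $p_{0,j}:=P(Q_0=j)$ such that $p_{0,j}>0$ for infinitely many $j$. Let $G_j:=\sum_{k\ge0}\mathbf 1(Q_k=j)$ and suppose $P(G_j<\infty)=1$ and $P(G_j=0)<1$ for every $j$, and that $G_1,G_2,\dots$ are independent. Then $$h_j:=P(G_j\ge1)=\frac{p_{0,j}}{p_{0,j}+p_{0,j+1}+\cdots},\qquad \prod_{j\ge1}(1-h_j)=0,$$ and the transition matrix has the form $$p_{i,j}=\mathbf 1(j=i)p_{i,i}+\mathbf 1(j>i)(1-p_{i,i})\,h_j\prod_{k=i+1}^{j-1}(1-h_k)=\mathbf 1(j=i)p_{i,i}+\mathbf 1(j>i)(1-p_{i,i})\frac{p_{0,j}}{p_{0,i+1}+p_{0,i+2}+\cdots}$$ for some self-transition probabilities $p_{i,i}<1$. Moreover (still assuming independence of the $G_j$) the following are equivalent: (a) $p_{i,i}=h_i$ for all $i$; (b) each $G_j$ is geometrically distributed on $\{0,1,2,\dots\}$; (c) $Q_\bullet$ is the weak record chain derived from $(p_{0,j})$. Also the following are equivalent: (a') $p_{i,i}=0$ for all $i$; (b') each $G_j$ has a Bernoulli distribution on $\{0,1\}$; (c') $Q_\bullet$ is the strict record chain derived from $(p_{0,j})$. In all cases, the chain $Q_\bullet$ observed only at its changes of state is a copy of the strict record chain derived from $(p_{0,j})$.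
   Context: Given a probability distribution $(p_{0,j})_{j\ge1}$ on positive integers, the weak record chain is the sequence of weak upper record values of an i.i.d. sequence with law $(p_{0,j})$; it is Markov with initial law $(p_{0,j})$ and transition matrix $p^{\le}_{i,j}=p_{0,j}\mathbf 1(i\le j)/(p_{0,i}+p_{0,i+1}+\cdots)$. The strict record chain is the sequence of strict upper record values; it is Markov with initial law $(p_{0,j})$ and transition matrix $p^{<}_{i,j}=p_{0,j}\mathbf 1(i<j)/(p_{0,i+1}+p_{0,i+2}+\cdots)$. *)

theory Defs
  imports "HOL-Probability.Probability"
begin

definition markov_chain_law ::
  "'a measure \<Rightarrow> (nat \<Rightarrow> 'a \<Rightarrow> nat) \<Rightarrow> (nat \<Rightarrow> real) \<Rightarrow> (nat \<Rightarrow> nat \<Rightarrow> real) \<Rightarrow> bool" where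
  "markov_chain_law M X p0 P \<longleftrightarrow>
     (\<forall>(n::nat) (s::nat \<Rightarrow> nat).
        measure M {\<omega> \<in> space M. \<forall>k\<le>n. X k \<omega> = s k}
          = p0 (s 0) * (\<Prod>k<n. P (s k) (s (Suc k))))"

definition visits :: "(nat \<Rightarrow> 'a \<Rightarrow> nat) \<Rightarrow> nat \<Rightarrow> 'a \<Rightarrow> enat" where
  "visits X j \<omega> = (if finite {k. X k \<omega> = j} then enat (card {k. X k \<omega> = j}) else \<infinity>)"

definition hit_prob :: "'a measure \<Rightarrow> (nat \<Rightarrow> 'a \<Rightarrow> nat) \<Rightarrow> nat \<Rightarrow> real" where
  "hit_prob M X j = measure M {\<omega> \<in> space M. visits X j \<omega> \<ge> 1}"

definition tail :: "(nat \<Rightarrow> real) \<Rightarrow> nat \<Rightarrow> real" where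
  "tail p0 i = (\<Sum>k. p0 (i + k))"

definition weak_record_matrix :: "(nat \<Rightarrow> real) \<Rightarrow> nat \<Rightarrow> nat \<Rightarrow> real" where
  "weak_record_matrix p0 i j = (if i \<le> j then p0 j / tail p0 i else 0)"

definition strict_record_matrix :: "(nat \<Rightarrow> real) \<Rightarrow> nat \<Rightarrow> nat \<Rightarrow> real" where
  "strict_record_matrix p0 i j = (if i < j then p0 j / tail p0 (i + 1) else 0)"

text \<open>The chain observed only at its changes of state: the n-th distinct value
  visited (the path is a.s. weakly increasing and visits infinitely many values).\<close>
definition jump_chain :: "(nat \<Rightarrow> 'a \<Rightarrow> nat) \<Rightarrow> nat \<Rightarrow> 'a \<Rightarrow> nat" where
  "jump_chain X n \<omega> = enumerate (range (\<lambda>k. X k \<omega>)) n"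

end

theory Submission
  imports Defs
begin


fun chp :: "(nat \<Rightarrow> nat \<Rightarrow> real) \<Rightarrow> nat \<Rightarrow> nat list \<Rightarrow> real" where
  "chp P x [] = 1"
| "chp P x (y # ys) = P x y * chp P y ys"

lemma chp_append: "chp P x (as @ bs) = chp P x as * chp P (last (x # as)) bs"
  by (induction as arbitrary: x) auto

lemma chp_prod: "chp P x ys = (\<Prod>k<length ys. P ((x # ys) ! k) ((x # ys) ! Suc k))"
proof (induction ys arbitrary: x)
  case Nil then show ?case by simp
next
  case (Cons y ys)
  show ?case
    by (simp add: Cons prod.lessThan_Suc_shift del: prod.lessThan_Suc)
qed

locale rc = prob_space M for M :: "'a measure" +
  fixes Q :: "nat \<Rightarrow> 'a \<Rightarrow> nat" and p0 :: "nat \<Rightarrow> real" and p :: "nat \<Rightarrow> nat \<Rightarrow> real"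
  assumes Q_meas[measurable]: "\<And>k. Q k \<in> measurable M (count_space UNIV)"
    and Q_pos: "\<And>k \<omega>. \<omega> \<in> space M \<Longrightarrow> Q k \<omega> \<ge> 1"
    and p0_nonneg: "\<And>j. p0 j \<ge> 0"
    and p0_zero: "p0 0 = 0"
    and p0_sums: "p0 sums 1"
    and p0_inf: "infinite {j. p0 j > 0}"
    and p_nonneg: "\<And>i j. i \<ge> 1 \<Longrightarrow> p i j \<ge> 0"
    and p_sums: "\<And>i. i \<ge> 1 \<Longrightarrow> (\<lambda>j. p i j) sums 1"
    and p_incr: "\<And>i j. i \<ge> 1 \<Longrightarrow> j < i \<Longrightarrow> p i j = 0"
    and markov: "markov_chain_law M Q p0 p"
    and G_fin: "\<And>j. j \<ge> 1 \<Longrightarrow> measure M {\<omega> \<in> space M. visits Q j \<omega> < \<infinity>} = 1"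
    and G_pos: "\<And>j. j \<ge> 1 \<Longrightarrow> measure M {\<omega> \<in> space M. visits Q j \<omega> = 0} < 1"
    and G_indep: "indep_vars (\<lambda>_. count_space UNIV) (\<lambda>j. visits Q j) {1..}"
begin

definition cyl :: "nat list \<Rightarrow> 'a set" where
  "cyl xs = {\<omega> \<in> space M. \<forall>k<length xs. Q k \<omega> = xs ! k}"

definition wt :: "nat list \<Rightarrow> real" where
  "wt xs = p0 (hd xs) * chp p (hd xs) (tl xs)"

lemma cyl_sets[measurable]: "cyl xs \<in> sets M"
  unfolding cyl_def by measurable

lemma cyl_measure: assumes "xs \<noteq> []" shows "prob (cyl xs) = wt xs"
proof -
  obtain x ys where xs: "xs = x # ys" using assms by (cases xs) auto
  have "prob {\<omega> \<in> space M. \<forall>k\<le>length ys. Q k \<omega> = xs ! k}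
      = p0 (xs ! 0) * (\<Prod>k<length ys. p (xs ! k) (xs ! Suc k))"
    using markov unfolding markov_chain_law_def by blast
  moreover have "{\<omega> \<in> space M. \<forall>k\<le>length ys. Q k \<omega> = xs ! k} = cyl xs"
    unfolding cyl_def xs by (auto simp: less_Suc_eq_le)
  ultimately show ?thesis unfolding wt_def xs by (simp add: chp_prod)
qed


lemma null_of_zero: "A \<in> sets M \<Longrightarrow> prob A = 0 \<Longrightarrow> A \<in> null_sets M"
  by (simp add: emeasure_eq_measure null_setsI)

lemma AE_support: "AE \<omega> in M. \<forall>xs. xs \<noteq> [] \<longrightarrow> wt xs = 0 \<longrightarrow> \<omega> \<notin> cyl xs"
proof (subst AE_all_countable, intro allI)
  fix xs :: "nat list"
  show "AE \<omega> in M. xs \<noteq> [] \<longrightarrow> wt xs = 0 \<longrightarrow> \<omega> \<notin> cyl xs"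
  proof (cases "xs \<noteq> [] \<and> wt xs = 0")
    case True
    then have "cyl xs \<in> null_sets M" using cyl_measure null_of_zero by simp
    from AE_not_in[OF this] show ?thesis by eventually_elim auto
  qed auto
qed

definition pref :: "'a \<Rightarrow> nat \<Rightarrow> nat list" where
  "pref \<omega> n = map (\<lambda>t. Q t \<omega>) [0..<n]"

lemma in_cyl_pref: "\<omega> \<in> space M \<Longrightarrow> \<omega> \<in> cyl (pref \<omega> n)"
  unfolding cyl_def pref_def by auto

lemma AE_mono: "AE \<omega> in M. \<forall>k. Q k \<omega> \<le> Q (Suc k) \<omega>"
  using AE_support AE_space
proof eventually_elim
  case (elim \<omega>)
  show ?case
  proof
    fix k
    define xs where "xs = pref \<omega> (Suc (Suc k))"
    have ne: "xs \<noteq> []" unfolding xs_def pref_def by simp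
    have "wt xs \<noteq> 0" using elim ne in_cyl_pref[of \<omega> "Suc (Suc k)"] unfolding xs_def by blast
    moreover have "xs = Q 0 \<omega> # map (\<lambda>t. Q t \<omega>) [Suc 0..<Suc (Suc k)]"
      unfolding xs_def pref_def by (simp add: upt_conv_Cons del: upt_Suc)
    ultimately have "(\<Prod>l<Suc k. p (xs ! l) (xs ! Suc l)) \<noteq> 0"
      unfolding wt_def by (auto simp: chp_prod simp del: upt_Suc)
    then have "p (xs ! k) (xs ! Suc k) \<noteq> 0" by auto
    moreover have "xs ! k = Q k \<omega>" "xs ! Suc k = Q (Suc k) \<omega>"
      unfolding xs_def pref_def by (simp_all del: upt_Suc add: nth_map_upt)
    ultimately have "p (Q k \<omega>) (Q (Suc k) \<omega>) \<noteq> 0" by simp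
    then show "Q k \<omega> \<le> Q (Suc k) \<omega>" using p_incr[of "Q k \<omega>" "Q (Suc k) \<omega>"] Q_pos[OF elim(2)]
      by (meson not_le)
  qed
qed

lemma visits_ge1: "visits X j \<omega> \<ge> 1 \<longleftrightarrow> (\<exists>t. X t \<omega> = j)"
  unfolding visits_def
  by (auto simp: one_enat_def Suc_le_eq card_gt_0_iff dest: infinite_imp_nonempty)

lemma visits_0: "visits X j \<omega> = 0 \<longleftrightarrow> (\<forall>t. X t \<omega> \<noteq> j)"
  unfolding visits_def by (auto simp: zero_enat_def dest: infinite_imp_nonempty)

lemma visits_fin: "visits X j \<omega> < \<infinity> \<longleftrightarrow> finite {t. X t \<omega> = j}"
  unfolding visits_def by auto

lemma visits_eq: "visits X j \<omega> = enat n \<longleftrightarrow> finite {t. X t \<omega> = j} \<and> card {t. X t \<omega> = j} = n"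
  unfolding visits_def by auto

lemma visits_meas: "j \<ge> 1 \<Longrightarrow> visits Q j \<in> measurable M (count_space UNIV)"
  using G_indep unfolding indep_vars_def by auto

lemma visits_sets: "j \<ge> 1 \<Longrightarrow> {\<omega> \<in> space M. visits Q j \<omega> \<in> S} \<in> sets M"
proof -
  assume "j \<ge> 1"
  from measurable_sets[OF visits_meas[OF this], of S]
  show ?thesis by (simp add: vimage_def Int_def conj_commute)
qed

lemma visits_sets': "j \<ge> 1 \<Longrightarrow> {\<omega> \<in> space M. P (visits Q j \<omega>)} \<in> sets M"
  using visits_sets[of j "{x. P x}"] by simp

lemma AE_fin: "AE \<omega> in M. \<forall>j\<ge>1. finite {t. Q t \<omega> = j}"
proof (subst AE_all_countable, intro allI)
  fix j :: nat
  show "AE \<omega> in M. j \<ge> 1 \<longrightarrow> finite {t. Q t \<omega> = j}"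
  proof (cases "j \<ge> 1")
    case True
    from AE_prob_1[OF G_fin[OF True]] show ?thesis
    proof eventually_elim
      case (elim \<omega>)
      then have "visits Q j \<omega> < \<infinity>" by simp
      then show ?case using visits_fin[of Q j \<omega>] by simp
    qed
  qed auto
qed

definition good :: "'a \<Rightarrow> bool" where
  "good \<omega> \<longleftrightarrow> \<omega> \<in> space M \<and> (\<forall>k. Q k \<omega> \<le> Q (Suc k) \<omega>) \<and> (\<forall>j\<ge>1. finite {t. Q t \<omega> = j})"

lemma AE_good: "AE \<omega> in M. good \<omega>"
  using AE_mono AE_fin AE_space by eventually_elim (auto simp: good_def)

lemma good_mono: "good \<omega> \<Longrightarrow> s \<le> t \<Longrightarrow> Q s \<omega> \<le> Q t \<omega>"
  unfolding good_def using lift_Suc_mono_le[of "\<lambda>k. Q k \<omega>"] by blast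

end


context rc begin

lemma sums_AE:
  assumes A: "\<And>n. A n \<in> sets M" and B: "B \<in> sets M"
    and disj: "AE \<omega> in M. \<forall>n m. \<omega> \<in> A n \<longrightarrow> \<omega> \<in> A m \<longrightarrow> n = m"
    and eq: "AE \<omega> in M. \<omega> \<in> B \<longleftrightarrow> (\<exists>n. \<omega> \<in> A n)"
  shows "(\<lambda>n. prob (A n)) sums prob B"
proof -
  have "AE \<omega> in M. (\<forall>n m. \<omega> \<in> A n \<longrightarrow> \<omega> \<in> A m \<longrightarrow> n = m) \<and> (\<omega> \<in> B \<longleftrightarrow> (\<exists>n. \<omega> \<in> A n))"
    using disj eq by eventually_elim auto
  from AE_E3[OF this] obtain N where N: "\<And>\<omega>. \<omega> \<in> space M - N \<Longrightarrow>
      (\<forall>n m. \<omega> \<in> A n \<longrightarrow> \<omega> \<in> A m \<longrightarrow> n = m) \<and> (\<omega> \<in> B \<longleftrightarrow> (\<exists>n. \<omega> \<in> A n))"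
    and Nn: "N \<in> null_sets M" by blast
  have Ns: "N \<in> sets M" using Nn by auto
  define A' where "A' n = A n - N" for n
  have As: "range A' \<subseteq> sets M" using A Ns unfolding A'_def by auto
  have sp: "x \<in> A n \<Longrightarrow> x \<in> space M" for x n using A[THEN sets.sets_into_space] by auto
  have "disjoint_family A'"
    unfolding disjoint_family_on_def
  proof (intro ballI impI)
    fix m n :: nat assume "m \<noteq> n"
    show "A' m \<inter> A' n = {}"
    proof (rule ccontr)
      assume "A' m \<inter> A' n \<noteq> {}"
      then obtain x where x: "x \<in> A m" "x \<in> A n" "x \<notin> N" unfolding A'_def by auto
      then have "x \<in> space M - N" using sp by auto
      from N[OF this] x have "m = n" by auto
      with \<open>m \<noteq> n\<close> show False by simp
    qed
  qed
  from measure_UNION[OF As this] have "(\<lambda>n. prob (A' n)) sums prob (\<Union>n. A' n)"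
    by (simp add: emeasure_eq_measure)
  moreover have "prob (A' n) = prob (A n)" for n
    unfolding A'_def using measure_Diff_null_set[OF A Nn] .
  moreover have "(\<Union>n. A' n) = B - N"
  proof (intro equalityI subsetI)
    fix x assume "x \<in> (\<Union>n. A' n)"
    then obtain n where x: "x \<in> A n" "x \<notin> N" unfolding A'_def by auto
    then have "x \<in> space M - N" using sp by auto
    from N[OF this] x show "x \<in> B - N" by auto
  next
    fix x assume x: "x \<in> B - N"
    then have "x \<in> space M - N" using B[THEN sets.sets_into_space] by auto
    from N[OF this] x show "x \<in> (\<Union>n. A' n)" unfolding A'_def by auto
  qed
  moreover have "prob (B - N) = prob B" using measure_Diff_null_set[OF B Nn] .
  ultimately show ?thesis by simp
qed

lemma indep_prod:
  assumes J: "finite J" "J \<subseteq> {1..}"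
  shows "prob {\<omega>\<in>space M. \<forall>j\<in>J. visits Q j \<omega> \<in> S j} = (\<Prod>j\<in>J. prob {\<omega>\<in>space M. visits Q j \<omega> \<in> S j})"
proof (cases "J = {}")
  case True
  then show ?thesis by (simp add: prob_space)
next
  case False
  have ind: "indep_sets (\<lambda>i. {visits Q i -` A \<inter> space M | A. A \<in> sets (count_space UNIV)}) {1..}"
    using G_indep unfolding indep_vars_def2 by auto
  have "prob (\<Inter>j\<in>J. visits Q j -` S j \<inter> space M) = (\<Prod>j\<in>J. prob (visits Q j -` S j \<inter> space M))"
  proof (rule indep_setsD[OF ind J(2) False J(1)], intro ballI)
    fix j assume "j \<in> J"
    show "visits Q j -` S j \<inter> space M \<in> {visits Q j -` A \<inter> space M | A. A \<in> sets (count_space UNIV)}"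
      by (rule CollectI, rule exI[of _ "S j"]) simp
  qed
  moreover have "(\<Inter>j\<in>J. visits Q j -` S j \<inter> space M) = {\<omega>\<in>space M. \<forall>j\<in>J. visits Q j \<omega> \<in> S j}"
    using False by auto
  moreover have "\<And>j. visits Q j -` S j \<inter> space M = {\<omega>\<in>space M. visits Q j \<omega> \<in> S j}" by auto
  ultimately show ?thesis by simp
qed

lemma pref_pre: "(\<lambda>\<omega>. pref \<omega> m) -` {xs} \<inter> space M = (if length xs = m then cyl xs else {})"
proof (cases "length xs = m")
  case True
  have "pref \<omega> m = xs \<longleftrightarrow> (\<forall>k<length xs. Q k \<omega> = xs ! k)" for \<omega>
    unfolding pref_def list_eq_iff_nth_eq using True by auto
  then show ?thesis using True unfolding cyl_def by auto
next
  case False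
  then show ?thesis unfolding pref_def by auto
qed

lemma pref_meas[measurable]: "(\<lambda>\<omega>. pref \<omega> m) \<in> measurable M (count_space UNIV)"
proof (rule measurable_count_space_eq_countable[THEN iffD2])
  show "countable (UNIV :: nat list set)" by simp
  show "(\<lambda>\<omega>. pref \<omega> m) \<in> space M \<rightarrow> UNIV \<and> (\<forall>a\<in>UNIV. (\<lambda>\<omega>. pref \<omega> m) -` {a} \<inter> space M \<in> sets M)"
    unfolding pref_pre by simp
qed

lemma wt_append: "wt (xs @ i # ys) = wt (xs @ [i]) * chp p i ys"
  by (cases xs) (auto simp: wt_def chp_append)

lemma pref_nth: "t < m \<Longrightarrow> pref \<omega> m ! t = Q t \<omega>"
  unfolding pref_def by simp

lemma markov_sum:
  fixes B :: "nat list \<Rightarrow> bool" and m i :: nat and ys :: "nat list"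
  defines "S \<equiv> {xs. set xs \<subseteq> {..i} \<and> length xs = m \<and> B xs}"
  shows "prob {\<omega>\<in>space M. B (pref \<omega> m) \<and> Q m \<omega> = i \<and> (\<forall>r<length ys. Q (Suc m + r) \<omega> = ys!r)}
     = (\<Sum>xs\<in>S. wt (xs @ i # ys))"
proof -
  have fin: "finite S" unfolding S_def
    using finite_lists_length_eq[of "{..i}" m] by (rule rev_finite_subset) auto
  let ?E = "{\<omega>\<in>space M. B (pref \<omega> m) \<and> Q m \<omega> = i \<and> (\<forall>r<length ys. Q (Suc m + r) \<omega> = ys!r)}"
  let ?U = "\<Union>xs\<in>S. cyl (xs @ i # ys)"
  have cyl_iff: "\<omega> \<in> cyl (xs @ i # ys) \<longleftrightarrow> \<omega> \<in> space M \<and> pref \<omega> m = xs \<and> Q m \<omega> = i \<and> (\<forall>r<length ys. Q (Suc m + r) \<omega> = ys!r)"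
    if "length xs = m" for xs \<omega>
  proof
    assume a: "\<omega> \<in> cyl (xs @ i # ys)"
    then have q: "\<And>k. k < m + Suc (length ys) \<Longrightarrow> Q k \<omega> = (xs @ i # ys) ! k"
      unfolding cyl_def using that by auto
    have "pref \<omega> m = xs"
    proof (rule nth_equalityI)
      show "length (pref \<omega> m) = length xs" using that by (simp add: pref_def)
      fix k assume "k < length (pref \<omega> m)"
      then have "k < m" by (simp add: pref_def)
      then show "pref \<omega> m ! k = xs ! k" using q[of k] that by (simp add: pref_nth nth_append)
    qed
    moreover have "Q m \<omega> = i" using q[of m] that by (simp add: nth_append)
    moreover have "Q (Suc m + r) \<omega> = ys ! r" if "r < length ys" for r
      using q[of "Suc m + r"] that \<open>length xs = m\<close> by (simp add: nth_append)
    ultimately show "\<omega> \<in> space M \<and> pref \<omega> m = xs \<and> Q m \<omega> = i \<and> (\<forall>r<length ys. Q (Suc m + r) \<omega> = ys!r)"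
      using a unfolding cyl_def by auto
  next
    assume a: "\<omega> \<in> space M \<and> pref \<omega> m = xs \<and> Q m \<omega> = i \<and> (\<forall>r<length ys. Q (Suc m + r) \<omega> = ys!r)"
    have "Q k \<omega> = (xs @ i # ys) ! k" if kl: "k < length (xs @ i # ys)" for k
    proof -
      consider "k < m" | "k = m" | r where "k = Suc m + r" "r < length ys"
      proof -
        assume h1: "k < m \<Longrightarrow> thesis" and h2: "k = m \<Longrightarrow> thesis"
          and h3: "\<And>r. k = Suc m + r \<Longrightarrow> r < length ys \<Longrightarrow> thesis"
        show thesis
        proof (cases "k \<le> m")
          case True then show ?thesis using h1 h2 by linarith
        next
          case False
          then have "k = Suc m + (k - Suc m)" "k - Suc m < length ys"
            using kl \<open>length xs = m\<close> by auto
          then show ?thesis by (rule h3)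
        qed
      qed
      then show ?thesis
      proof cases
        case 1 then show ?thesis using a kl \<open>length xs = m\<close> by (auto simp: nth_append pref_nth[symmetric])
      next
        case 2 then show ?thesis using a \<open>length xs = m\<close> by (simp add: nth_append)
      next
        case 3 then show ?thesis using a \<open>length xs = m\<close> by (simp add: nth_append)
      qed
    qed
    then show "\<omega> \<in> cyl (xs @ i # ys)" using a unfolding cyl_def by auto
  qed
  have "AE \<omega> in M. \<omega> \<in> ?E \<longleftrightarrow> \<omega> \<in> ?U"
    using AE_good
  proof eventually_elim
    case (elim \<omega>)
    show ?case
    proof
      assume e: "\<omega> \<in> ?E"
      have "set (pref \<omega> m) \<subseteq> {..i}"
        using good_mono[OF elim, of _ m] e unfolding pref_def by auto
      then have "pref \<omega> m \<in> S" using e unfolding S_def pref_def by auto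
      moreover have "\<omega> \<in> cyl (pref \<omega> m @ i # ys)"
        using e by (subst cyl_iff) (auto simp: pref_def)
      ultimately show "\<omega> \<in> ?U" by blast
    next
      assume "\<omega> \<in> ?U"
      then obtain xs where "xs \<in> S" "\<omega> \<in> cyl (xs @ i # ys)" by blast
      then show "\<omega> \<in> ?E" using cyl_iff[of xs \<omega>] unfolding S_def by auto
    qed
  qed
  moreover have "?E \<in> sets M" by measurable
  moreover have "?U \<in> sets M" using fin by (intro sets.finite_UN) auto
  ultimately have "prob ?E = prob ?U"
    by (rule measure_eq_AE)
  also have "\<dots> = (\<Sum>xs\<in>S. prob (cyl (xs @ i # ys)))"
  proof (rule finite_measure_finite_Union[OF fin])
    show "(\<lambda>xs. cyl (xs @ i # ys)) ` S \<subseteq> sets M" by auto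
    show "disjoint_family_on (\<lambda>xs. cyl (xs @ i # ys)) S"
      unfolding disjoint_family_on_def
    proof (intro ballI impI)
      fix xs zs assume "xs \<in> S" "zs \<in> S" "xs \<noteq> zs"
      then show "cyl (xs @ i # ys) \<inter> cyl (zs @ i # ys) = {}"
        using cyl_iff[of xs] cyl_iff[of zs] unfolding S_def by auto
    qed
  qed
  also have "\<dots> = (\<Sum>xs\<in>S. wt (xs @ i # ys))"
    by (intro sum.cong refl cyl_measure) auto
  finally show ?thesis .
qed

lemma markov_prefix:
  fixes B :: "nat list \<Rightarrow> bool"
  shows "prob {\<omega>\<in>space M. B (pref \<omega> m) \<and> Q m \<omega> = i \<and> (\<forall>r<length ys. Q (Suc m + r) \<omega> = ys!r)}
     = prob {\<omega>\<in>space M. B (pref \<omega> m) \<and> Q m \<omega> = i} * chp p i ys"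
proof -
  let ?S = "{xs. set xs \<subseteq> {..i} \<and> length xs = m \<and> B xs}"
  have e: "{\<omega>\<in>space M. B (pref \<omega> m) \<and> Q m \<omega> = i} =
    {\<omega>\<in>space M. B (pref \<omega> m) \<and> Q m \<omega> = i \<and> (\<forall>r<length ([]::nat list). Q (Suc m + r) \<omega> = []!r)}"
    by simp
  have "(\<Sum>xs\<in>?S. wt (xs @ i # ys)) = (\<Sum>xs\<in>?S. wt (xs @ [i])) * chp p i ys"
    unfolding sum_distrib_right by (intro sum.cong refl wt_append)
  then show ?thesis unfolding e markov_sum by simp
qed

end


context rc begin

lemma p0_summable: "summable p0" using p0_sums by (rule sums_summable)

lemma tail_eq: "tail p0 j = 1 - (\<Sum>k<j. p0 k)"
proof -
  have "suminf p0 = (\<Sum>n. p0 (n + j)) + (\<Sum>i<j. p0 i)"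
    by (rule suminf_split_initial_segment[OF p0_summable])
  moreover have "suminf p0 = 1" using p0_sums by (simp add: sums_iff)
  ultimately show ?thesis unfolding tail_def by (simp add: add.commute)
qed

lemma tail_Suc: "tail p0 (Suc j) = tail p0 j - p0 j"
  unfolding tail_eq by simp

lemma tail_pos: "tail p0 j > 0"
proof -
  obtain k where k: "k \<ge> j" "p0 k > 0"
    using p0_inf by (metis (mono_tags, lifting) finite_nat_set_iff_bounded_le mem_Collect_eq nat_le_linear)
  have "summable (\<lambda>n. p0 (j + n))"
    using p0_summable summable_iff_shift[of p0 j] by (simp add: add.commute)
  moreover have "0 < p0 (j + (k - j))" using k by simp
  ultimately show ?thesis unfolding tail_def
    by (intro suminf_pos2[of _ "k - j"]) (auto simp: p0_nonneg)
qed

lemma tail_1: "tail p0 1 = 1"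
  unfolding tail_eq by (simp add: p0_zero)

lemma tail_lim: "(\<lambda>n. tail p0 n) \<longlonglongrightarrow> 0"
proof -
  have "(\<lambda>n. \<Sum>k<n. p0 k) \<longlonglongrightarrow> 1" using p0_sums by (simp add: sums_def)
  then have "(\<lambda>n. 1 - (\<Sum>k<n. p0 k)) \<longlonglongrightarrow> 1 - 1" by (intro tendsto_intros)
  then show ?thesis unfolding tail_eq by simp
qed

lemma tail_prod: "a \<le> b \<Longrightarrow> (\<Prod>k\<in>{a..<b}. tail p0 (Suc k) / tail p0 k) = tail p0 b / tail p0 a"
proof (induction b rule: dec_induct)
  case base
  then show ?case using tail_pos[of a] by simp
next
  case (step n)
  then show ?case using tail_pos[of n] by (simp add: prod.atLeastLessThan_Suc)
qed

lemma prob_Q0: "prob {\<omega>\<in>space M. Q 0 \<omega> = k} = p0 k"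
proof -
  have "{\<omega>\<in>space M. Q 0 \<omega> = k} = cyl [k]" unfolding cyl_def by auto
  then show ?thesis using cyl_measure[of "[k]"] by (simp add: wt_def)
qed

lemma prob_Q0_ge: "prob {\<omega>\<in>space M. Q 0 \<omega> \<ge> j} = tail p0 j"
proof -
  have "prob (\<Union>k\<in>{..<j}. {\<omega>\<in>space M. Q 0 \<omega> = k}) = (\<Sum>k<j. prob {\<omega>\<in>space M. Q 0 \<omega> = k})"
    by (rule finite_measure_finite_Union) (auto simp: disjoint_family_on_def)
  moreover have "(\<Union>k\<in>{..<j}. {\<omega>\<in>space M. Q 0 \<omega> = k}) = {\<omega>\<in>space M. Q 0 \<omega> < j}" by auto
  moreover have "{\<omega>\<in>space M. Q 0 \<omega> \<ge> j} = space M - {\<omega>\<in>space M. Q 0 \<omega> < j}" by auto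
  moreover have "{\<omega>\<in>space M. Q 0 \<omega> < j} \<in> sets M" by measurable
  ultimately show ?thesis using prob_compl by (simp add: prob_Q0 tail_eq)
qed

abbreviation hh :: "nat \<Rightarrow> real" where "hh j \<equiv> hit_prob M Q j"

lemma visits_ge1_iff_ne0: "visits X j \<omega> \<ge> 1 \<longleftrightarrow> \<not> visits X j \<omega> = 0"
  unfolding visits_ge1 visits_0 by auto

lemma prob_visits0: "j \<ge> 1 \<Longrightarrow> prob {\<omega>\<in>space M. visits Q j \<omega> \<in> {0}} = 1 - hh j"
proof -
  assume j: "j \<ge> 1"
  have "{\<omega>\<in>space M. visits Q j \<omega> \<in> {0}} = space M - {\<omega> \<in> space M. visits Q j \<omega> \<ge> 1}"
    by (auto simp: visits_ge1_iff_ne0)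
  then show ?thesis unfolding hit_prob_def using prob_compl visits_sets'[OF j] by simp
qed

lemma prob_visits1: "prob {\<omega>\<in>space M. visits Q j \<omega> \<in> {x. x \<ge> 1}} = hh j"
  unfolding hit_prob_def by simp

lemma hh_pos: "j \<ge> 1 \<Longrightarrow> hh j > 0"
  using G_pos[of j] prob_visits0[of j] by simp

lemma tail_hprod: "j \<ge> 1 \<Longrightarrow> tail p0 j = (\<Prod>k\<in>{1..<j}. 1 - hh k)"
proof -
  assume j: "j \<ge> 1"
  let ?A = "{\<omega>\<in>space M. \<forall>k\<in>{1..<j}. visits Q k \<omega> \<in> {0}}"
  have "AE \<omega> in M. \<omega> \<in> {\<omega>\<in>space M. Q 0 \<omega> \<ge> j} \<longleftrightarrow> \<omega> \<in> ?A"
    using AE_good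
  proof eventually_elim
    case (elim \<omega>)
    have sp: "\<omega> \<in> space M" using elim good_def by auto
    show ?case
    proof
      assume "\<omega> \<in> {\<omega>\<in>space M. Q 0 \<omega> \<ge> j}"
      then have "Q t \<omega> \<ge> j" for t using good_mono[OF elim, of 0 t] by auto
      then show "\<omega> \<in> ?A" using sp by (auto simp: visits_0) (metis leD)
    next
      assume "\<omega> \<in> ?A"
      then have "\<forall>k\<in>{1..<j}. Q 0 \<omega> \<noteq> k" by (auto simp: visits_0)
      then show "\<omega> \<in> {\<omega>\<in>space M. Q 0 \<omega> \<ge> j}" using sp Q_pos[OF sp, of 0] by auto
    qed
  qed
  moreover have "?A \<in> sets M"
    by (rule sets.sets_Collect_finite_All) (auto intro: visits_sets')
  ultimately have "prob {\<omega>\<in>space M. Q 0 \<omega> \<ge> j} = prob ?A"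
    by (intro measure_eq_AE) auto
  also have "\<dots> = (\<Prod>k\<in>{1..<j}. prob {\<omega>\<in>space M. visits Q k \<omega> \<in> {0}})"
    by (rule indep_prod) auto
  also have "\<dots> = (\<Prod>k\<in>{1..<j}. 1 - hh k)"
    by (intro prod.cong refl prob_visits0) auto
  finally show ?thesis using prob_Q0_ge by simp
qed


lemma p0_hprod: "j \<ge> 1 \<Longrightarrow> p0 j = (\<Prod>k\<in>{1..<j}. 1 - hh k) * hh j"
proof -
  assume j: "j \<ge> 1"
  define S where "S k = (if k = j then {x. x \<ge> (1::enat)} else {0})" for k
  let ?A = "{\<omega>\<in>space M. \<forall>k\<in>{1..j}. visits Q k \<omega> \<in> S k}"
  have "AE \<omega> in M. \<omega> \<in> {\<omega>\<in>space M. Q 0 \<omega> = j} \<longleftrightarrow> \<omega> \<in> ?A"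
    using AE_good
  proof eventually_elim
    case (elim \<omega>)
    have sp: "\<omega> \<in> space M" using elim good_def by auto
    show ?case
    proof
      assume a: "\<omega> \<in> {\<omega>\<in>space M. Q 0 \<omega> = j}"
      then have "Q t \<omega> \<ge> j" for t using good_mono[OF elim, of 0 t] by auto
      then have "visits Q k \<omega> = 0" if "k < j" for k using that by (auto simp: visits_0) (metis leD)
      moreover have "visits Q j \<omega> \<ge> 1" using a by (auto simp: visits_ge1)
      ultimately show "\<omega> \<in> ?A" using sp unfolding S_def by auto
    next
      assume a: "\<omega> \<in> ?A"
      have "Q 0 \<omega> \<noteq> k" if k: "k \<in> {1..<j}" for k
      proof -
        have "visits Q k \<omega> \<in> S k" using a k by auto
        then have "visits Q k \<omega> = 0" using k unfolding S_def by auto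
        then show ?thesis by (simp add: visits_0)
      qed
      then have "Q 0 \<omega> \<notin> {1..<j}" by blast
      then have ge: "Q 0 \<omega> \<ge> j" using Q_pos[OF sp, of 0] by simp
      have "visits Q j \<omega> \<in> S j" using a j by auto
      then have "visits Q j \<omega> \<ge> 1" unfolding S_def by simp
      then have "\<exists>t. Q t \<omega> = j" by (simp only: visits_ge1)
      then obtain t where "Q t \<omega> = j" by blast
      then have "Q 0 \<omega> = j" using ge good_mono[OF elim, of 0 t] by auto
      then show "\<omega> \<in> {\<omega>\<in>space M. Q 0 \<omega> = j}" using sp by auto
    qed
  qed
  moreover have "?A \<in> sets M"
    by (rule sets.sets_Collect_finite_All) (auto intro: visits_sets)
  ultimately have "prob {\<omega>\<in>space M. Q 0 \<omega> = j} = prob ?A"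
    by (intro measure_eq_AE) auto
  also have "\<dots> = (\<Prod>k\<in>{1..j}. prob {\<omega>\<in>space M. visits Q k \<omega> \<in> S k})"
    by (rule indep_prod) auto
  also have "\<dots> = (\<Prod>k\<in>{1..<j}. prob {\<omega>\<in>space M. visits Q k \<omega> \<in> S k}) * prob {\<omega>\<in>space M. visits Q j \<omega> \<in> S j}"
  proof -
    have "{1..j} = insert j {1..<j}" using j by auto
    then show ?thesis by (simp add: mult.commute)
  qed
  also have "\<dots> = (\<Prod>k\<in>{1..<j}. 1 - hh k) * hh j"
    by (intro arg_cong2[where f="(*)"] prod.cong refl) (auto simp: S_def prob_visits0[simplified] hit_prob_def)
  finally show ?thesis using prob_Q0 by simp
qed

lemma hh_formula: "j \<ge> 1 \<Longrightarrow> hh j = p0 j / tail p0 j"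
proof -
  assume j: "j \<ge> 1"
  define P where "P = (\<Prod>k\<in>{1..<j}. 1 - hh k)"
  have "P > 0" using tail_hprod[OF j] tail_pos[of j] unfolding P_def by simp
  moreover have "p0 j / tail p0 j = (P * hh j) / P"
    using p0_hprod[OF j] tail_hprod[OF j] unfolding P_def by (simp add: mult.commute)
  ultimately show ?thesis by simp
qed

lemma hh_prod_lim: "(\<lambda>n. \<Prod>j\<in>{1..n}. 1 - hh j) \<longlonglongrightarrow> 0"
proof -
  have "(\<Prod>j\<in>{1..n}. 1 - hh j) = tail p0 (Suc n)" for n
    using tail_hprod[of "Suc n"] by (simp add: atLeastLessThanSuc_atLeastAtMost)
  then show ?thesis using tail_lim LIMSEQ_Suc by simp
qed

lemma one_minus_hh: "j \<ge> 1 \<Longrightarrow> 1 - hh j = tail p0 (Suc j) / tail p0 j"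
  using hh_formula[of j] tail_pos[of j] tail_Suc[of j] by (simp add: field_simps)

lemma hprod_tail: "a < b \<Longrightarrow> (\<Prod>k\<in>{Suc a..<b}. 1 - hh k) = tail p0 b / tail p0 (Suc a)"
proof -
  assume ab: "a < b"
  have "(\<Prod>k\<in>{Suc a..<b}. 1 - hh k) = (\<Prod>k\<in>{Suc a..<b}. tail p0 (Suc k) / tail p0 k)"
    by (intro prod.cong refl one_minus_hh) auto
  also have "\<dots> = tail p0 b / tail p0 (Suc a)" using ab by (intro tail_prod) auto
  finally show ?thesis .
qed

end


context rc begin

lemma onestep: "prob {\<omega>\<in>space M. Q n \<omega> = i \<and> Q (Suc n) \<omega> = j} = prob {\<omega>\<in>space M. Q n \<omega> = i} * p i j"
proof -
  have "{\<omega>\<in>space M. True \<and> Q n \<omega> = i \<and> (\<forall>r<length [j]. Q (Suc n + r) \<omega> = [j]!r)}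
      = {\<omega>\<in>space M. Q n \<omega> = i \<and> Q (Suc n) \<omega> = j}" by auto
  moreover have "{\<omega>\<in>space M. True \<and> Q n \<omega> = i} = {\<omega>\<in>space M. Q n \<omega> = i}" by simp
  ultimately show ?thesis using markov_prefix[of "\<lambda>_. True" n i "[j]"] by simp
qed

lemma leave: "prob {\<omega>\<in>space M. Q n \<omega> = i \<and> Q (Suc n) \<omega> \<noteq> i} = prob {\<omega>\<in>space M. Q n \<omega> = i} * (1 - p i i)"
proof -
  have "{\<omega>\<in>space M. Q n \<omega> = i \<and> Q (Suc n) \<omega> \<noteq> i} =
     {\<omega>\<in>space M. Q n \<omega> = i} - {\<omega>\<in>space M. Q n \<omega> = i \<and> Q (Suc n) \<omega> = i}" by auto
  moreover have "prob ({\<omega>\<in>space M. Q n \<omega> = i} - {\<omega>\<in>space M. Q n \<omega> = i \<and> Q (Suc n) \<omega> = i}) =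
      prob {\<omega>\<in>space M. Q n \<omega> = i} - prob {\<omega>\<in>space M. Q n \<omega> = i \<and> Q (Suc n) \<omega> = i}"
    by (rule finite_measure_Diff) auto
  ultimately show ?thesis using onestep[of n i i] by (simp add: algebra_simps)
qed

lemma good_last:
  assumes g: "good \<omega>" and i: "i \<ge> 1" and t: "Q t \<omega> = i"
  obtains n where "Q n \<omega> = i" "Q (Suc n) \<omega> \<noteq> i" "\<And>s. Q s \<omega> = i \<Longrightarrow> s \<le> n"
proof -
  let ?F = "{t. Q t \<omega> = i}"
  have fin: "finite ?F" using g i unfolding good_def by auto
  have ne: "t \<in> ?F" using t by simp
  define n where "n = Max ?F"
  have "n \<in> ?F" unfolding n_def using fin ne by (intro Max_in) auto
  moreover have "\<And>s. Q s \<omega> = i \<Longrightarrow> s \<le> n" unfolding n_def using fin by (intro Max_ge) auto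
  ultimately show ?thesis
  proof -
    assume "n \<in> ?F" "\<And>s. Q s \<omega> = i \<Longrightarrow> s \<le> n"
    moreover have "Suc n \<notin> ?F" using \<open>\<And>s. Q s \<omega> = i \<Longrightarrow> s \<le> n\<close> by fastforce
    ultimately show ?thesis using that[of n] by blast
  qed
qed

lemma sums_leave: assumes i: "i \<ge> 1"
  shows "(\<lambda>n. prob {\<omega>\<in>space M. Q n \<omega> = i \<and> Q (Suc n) \<omega> \<noteq> i}) sums hh i"
  unfolding hit_prob_def
proof (rule sums_AE)
  show "{\<omega> \<in> space M. 1 \<le> visits Q i \<omega>} \<in> sets M" using visits_sets'[OF i] .
  show "AE \<omega> in M. \<forall>n m. \<omega> \<in> {\<omega> \<in> space M. Q n \<omega> = i \<and> Q (Suc n) \<omega> \<noteq> i} \<longrightarrow>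
                 \<omega> \<in> {\<omega> \<in> space M. Q m \<omega> = i \<and> Q (Suc m) \<omega> \<noteq> i} \<longrightarrow> n = m"
    using AE_good
  proof (eventually_elim, intro allI impI)
    fix \<omega> n m
    assume g: "good \<omega>" and a: "\<omega> \<in> {\<omega> \<in> space M. Q n \<omega> = i \<and> Q (Suc n) \<omega> \<noteq> i}"
      and b: "\<omega> \<in> {\<omega> \<in> space M. Q m \<omega> = i \<and> Q (Suc m) \<omega> \<noteq> i}"
    have False if "n < m" "Q n \<omega> = i" "Q (Suc n) \<omega> \<noteq> i" "Q m \<omega> = i" for n m
      using good_mono[OF g, of n "Suc n"] good_mono[OF g, of "Suc n" m] that by auto
    moreover have "Q n \<omega> = i" "Q (Suc n) \<omega> \<noteq> i" "Q m \<omega> = i" "Q (Suc m) \<omega> \<noteq> i" using a b by auto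
    ultimately show "n = m" using linorder_neqE_nat by metis
  qed
  show "AE \<omega> in M. (\<omega> \<in> {\<omega> \<in> space M. 1 \<le> visits Q i \<omega>}) = (\<exists>n. \<omega> \<in> {\<omega> \<in> space M. Q n \<omega> = i \<and> Q (Suc n) \<omega> \<noteq> i})"
    using AE_good
  proof eventually_elim
    case (elim \<omega>)
    have sp: "\<omega> \<in> space M" using elim good_def by auto
    show ?case
    proof
      assume "\<omega> \<in> {\<omega> \<in> space M. 1 \<le> visits Q i \<omega>}"
      then obtain t where "Q t \<omega> = i" by (auto simp: visits_ge1)
      from good_last[OF elim i this] obtain n where "Q n \<omega> = i" "Q (Suc n) \<omega> \<noteq> i" by blast
      then show "\<exists>n. \<omega> \<in> {\<omega> \<in> space M. Q n \<omega> = i \<and> Q (Suc n) \<omega> \<noteq> i}" using sp by auto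
    next
      assume "\<exists>n. \<omega> \<in> {\<omega> \<in> space M. Q n \<omega> = i \<and> Q (Suc n) \<omega> \<noteq> i}"
      then show "\<omega> \<in> {\<omega> \<in> space M. 1 \<le> visits Q i \<omega>}" using sp by (auto simp: visits_ge1)
    qed
  qed
qed auto

definition Bset :: "nat \<Rightarrow> nat \<Rightarrow> 'a set" where
  "Bset i j = {\<omega>\<in>space M. \<forall>k\<in>{i..j}. visits Q k \<omega> \<in> (if k = i \<or> k = j then {x. x \<ge> 1} else {0})}"

lemma Bset_sets: "i \<ge> 1 \<Longrightarrow> Bset i j \<in> sets M"
  unfolding Bset_def by (rule sets.sets_Collect_finite_All, rule visits_sets) auto

lemma sums_jump: assumes i: "i \<ge> 1" and ij: "i < j"
  shows "(\<lambda>n. prob {\<omega>\<in>space M. Q n \<omega> = i \<and> Q (Suc n) \<omega> = j}) sums prob (Bset i j)"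
proof (rule sums_AE)
  show "Bset i j \<in> sets M" using Bset_sets[OF i] .
  show "AE \<omega> in M. \<forall>n m. \<omega> \<in> {\<omega> \<in> space M. Q n \<omega> = i \<and> Q (Suc n) \<omega> = j} \<longrightarrow>
                 \<omega> \<in> {\<omega> \<in> space M. Q m \<omega> = i \<and> Q (Suc m) \<omega> = j} \<longrightarrow> n = m"
    using AE_good
  proof (eventually_elim, intro allI impI)
    fix \<omega> n m
    assume g: "good \<omega>" and a: "\<omega> \<in> {\<omega> \<in> space M. Q n \<omega> = i \<and> Q (Suc n) \<omega> = j}"
      and b: "\<omega> \<in> {\<omega> \<in> space M. Q m \<omega> = i \<and> Q (Suc m) \<omega> = j}"
    have False if "n < m" "Q (Suc n) \<omega> = j" "Q m \<omega> = i" for n m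
      using good_mono[OF g, of "Suc n" m] that ij by auto
    moreover have "Q n \<omega> = i" "Q (Suc n) \<omega> = j" "Q m \<omega> = i" "Q (Suc m) \<omega> = j" using a b by auto
    ultimately show "n = m" using linorder_neqE_nat by metis
  qed
  show "AE \<omega> in M. (\<omega> \<in> Bset i j) = (\<exists>n. \<omega> \<in> {\<omega> \<in> space M. Q n \<omega> = i \<and> Q (Suc n) \<omega> = j})"
    using AE_good
  proof eventually_elim
    case (elim \<omega>)
    have sp: "\<omega> \<in> space M" using elim good_def by auto
    show ?case
    proof
      assume B: "\<omega> \<in> Bset i j"
      have all: "\<forall>k\<in>{i..j}. visits Q k \<omega> \<in> (if k = i \<or> k = j then {x. x \<ge> 1} else {0})"
        using B unfolding Bset_def by auto
      have "visits Q i \<omega> \<in> (if i = i \<or> i = j then {x. x \<ge> 1} else {0})"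
        using all ij by (intro bspec[OF all]) auto
      then have vi: "visits Q i \<omega> \<ge> 1" by simp
      have "visits Q j \<omega> \<in> (if j = i \<or> j = j then {x. x \<ge> 1} else {0})"
        using all ij by (intro bspec[OF all]) auto
      then have vj: "visits Q j \<omega> \<ge> 1" by simp
      have vk: "visits Q k \<omega> = 0" if "i < k" "k < j" for k
      proof -
        have "visits Q k \<omega> \<in> (if k = i \<or> k = j then {x. x \<ge> 1} else {0})"
          using that by (intro bspec[OF all]) auto
        then show ?thesis using that by simp
      qed
      from vi obtain t where "Q t \<omega> = i" by (auto simp: visits_ge1)
      from good_last[OF elim i this] obtain n where n: "Q n \<omega> = i" "Q (Suc n) \<omega> \<noteq> i" by blast
      from vj obtain t' where t': "Q t' \<omega> = j" by (auto simp: visits_ge1)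
      have "t' > n"
      proof (rule ccontr)
        assume "\<not> n < t'"
        then have "Q t' \<omega> \<le> Q n \<omega>" using good_mono[OF elim] by auto
        then show False using t' n ij by auto
      qed
      then have le: "Q (Suc n) \<omega> \<le> j" using good_mono[OF elim, of "Suc n" t'] t' by auto
      have gt: "Q (Suc n) \<omega> > i" using good_mono[OF elim, of n "Suc n"] n by auto
      have "\<not> (Q (Suc n) \<omega> < j)"
      proof
        assume "Q (Suc n) \<omega> < j"
        then have "visits Q (Q (Suc n) \<omega>) \<omega> = 0" using vk gt by auto
        then show False by (auto simp: visits_0)
      qed
      then have "Q (Suc n) \<omega> = j" using le by auto
      then show "\<exists>n. \<omega> \<in> {\<omega> \<in> space M. Q n \<omega> = i \<and> Q (Suc n) \<omega> = j}" using sp n by auto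
    next
      assume "\<exists>n. \<omega> \<in> {\<omega> \<in> space M. Q n \<omega> = i \<and> Q (Suc n) \<omega> = j}"
      then obtain n where n: "Q n \<omega> = i" "Q (Suc n) \<omega> = j" by auto
      have "Q t \<omega> \<noteq> k" if "i < k" "k < j" for k t
      proof (cases "t \<le> n")
        case True then show ?thesis using good_mono[OF elim True] n that by auto
      next
        case False then have sn: "Suc n \<le> t" by auto
        show ?thesis using good_mono[OF elim sn] n that by auto
      qed
      then have "visits Q k \<omega> = 0" if "i < k" "k < j" for k using that by (simp add: visits_0)
      moreover have "visits Q i \<omega> \<ge> 1" "visits Q j \<omega> \<ge> 1" using n by (auto simp: visits_ge1)
      ultimately show "\<omega> \<in> Bset i j" unfolding Bset_def using sp by auto
    qed
  qed
qed auto

lemma prob_Bset: assumes i: "i \<ge> 1" and ij: "i < j"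
  shows "prob (Bset i j) = hh i * (\<Prod>k\<in>{Suc i..<j}. 1 - hh k) * hh j"
proof -
  define S where "S k = (if k = i \<or> k = j then {x. x \<ge> (1::enat)} else {0})" for k
  have "prob (Bset i j) = (\<Prod>k\<in>{i..j}. prob {\<omega>\<in>space M. visits Q k \<omega> \<in> S k})"
    unfolding Bset_def S_def[symmetric] using i by (intro indep_prod) auto
  also have "{i..j} = insert i (insert j {Suc i..<j})" using ij by auto
  also have "(\<Prod>k\<in>insert i (insert j {Suc i..<j}). prob {\<omega>\<in>space M. visits Q k \<omega> \<in> S k})
      = prob {\<omega>\<in>space M. visits Q i \<omega> \<in> S i} * (prob {\<omega>\<in>space M. visits Q j \<omega> \<in> S j} *
        (\<Prod>k\<in>{Suc i..<j}. prob {\<omega>\<in>space M. visits Q k \<omega> \<in> S k}))"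
    using ij by simp
  also have "(\<Prod>k\<in>{Suc i..<j}. prob {\<omega>\<in>space M. visits Q k \<omega> \<in> S k}) = (\<Prod>k\<in>{Suc i..<j}. 1 - hh k)"
    using i by (intro prod.cong refl) (auto simp: S_def prob_visits0[simplified])
  also have "prob {\<omega>\<in>space M. visits Q i \<omega> \<in> S i} = hh i" unfolding S_def hit_prob_def by simp
  also have "prob {\<omega>\<in>space M. visits Q j \<omega> \<in> S j} = hh j" unfolding S_def hit_prob_def by simp
  finally show ?thesis by (simp add: mult.commute mult.left_commute)
qed

lemma pii_le1: "i \<ge> 1 \<Longrightarrow> p i i \<le> 1"
proof -
  assume i: "i \<ge> 1"
  have "sum (\<lambda>j. p i j) {i} \<le> suminf (\<lambda>j. p i j)"
    using p_sums[OF i] p_nonneg[OF i] by (intro sum_le_suminf) (auto simp: sums_iff)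
  then show ?thesis using p_sums[OF i] by (simp add: sums_iff)
qed

lemma pii_lt1: "i \<ge> 1 \<Longrightarrow> p i i < 1"
proof (rule ccontr)
  assume i: "i \<ge> 1" and "\<not> p i i < 1"
  then have "p i i = 1" using pii_le1[OF i] by auto
  then have "(\<lambda>n. 0::real) sums hh i" using sums_leave[OF i] by (simp add: leave)
  then have "hh i = 0" using sums_zero sums_unique2 by blast
  then show False using hh_pos[OF i] by simp
qed

lemma pij_formula: assumes i: "i \<ge> 1" and ij: "i < j"
  shows "p i j = (1 - p i i) * hh j * (\<Prod>k\<in>{Suc i..<j}. 1 - hh k)"
proof -
  define c where "c = 1 - p i i"
  have c: "c > 0" using pii_lt1[OF i] unfolding c_def by simp
  let ?\<pi> = "\<lambda>n. prob {\<omega>\<in>space M. Q n \<omega> = i}"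
  have "(\<lambda>n. ?\<pi> n * c) sums hh i" using sums_leave[OF i] by (simp add: leave c_def)
  then have "(\<lambda>n. ?\<pi> n * c / c) sums (hh i / c)" by (rule sums_divide)
  then have "?\<pi> sums (hh i / c)" using c by simp
  then have "(\<lambda>n. ?\<pi> n * p i j) sums (hh i / c * p i j)" by (rule sums_mult2)
  then have "(\<lambda>n. prob {\<omega>\<in>space M. Q n \<omega> = i \<and> Q (Suc n) \<omega> = j}) sums (hh i / c * p i j)"
    by (simp add: onestep)
  with sums_jump[OF i ij] have "hh i / c * p i j = prob (Bset i j)" using sums_unique2 by blast
  also have "\<dots> = hh i * (\<Prod>k\<in>{Suc i..<j}. 1 - hh k) * hh j" by (rule prob_Bset[OF i ij])
  finally have "hh i * (p i j / c) = hh i * ((\<Prod>k\<in>{Suc i..<j}. 1 - hh k) * hh j)" by simp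
  moreover have hne: "hh i \<noteq> 0" using hh_pos[OF i] by simp
  ultimately have "p i j / c = (\<Prod>k\<in>{Suc i..<j}. 1 - hh k) * hh j"
    using mult_left_cancel[OF hne] by blast
  then show ?thesis using c unfolding c_def[symmetric] by (simp add: field_simps)
qed

lemma pij_formula2: assumes i: "i \<ge> 1" and ij: "i < j"
  shows "p i j = (1 - p i i) * p0 j / tail p0 (i + 1)"
proof -
  have j: "j \<ge> 1" using i ij by simp
  have "hh j * (\<Prod>k\<in>{Suc i..<j}. 1 - hh k) = p0 j / tail p0 j * (tail p0 j / tail p0 (Suc i))"
    using hh_formula[OF j] hprod_tail[OF ij] by simp
  also have "\<dots> = p0 j / tail p0 (Suc i)" using tail_pos[of j] by simp
  finally show ?thesis using pij_formula[OF i ij] by (simp add: mult.assoc)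
qed

end


lemma chp_replicate: "chp P j (replicate l j) = P j j ^ l"
  by (induction l) auto

context rc begin

definition Bfe :: "nat \<Rightarrow> nat list \<Rightarrow> bool" where
  "Bfe j xs \<longleftrightarrow> xs = [] \<or> last xs \<noteq> j"

definition Rset :: "nat \<Rightarrow> nat \<Rightarrow> nat \<Rightarrow> 'a set" where
  "Rset j m l = {\<omega>\<in>space M. Bfe j (pref \<omega> m) \<and> Q m \<omega> = j \<and> (\<forall>r<l. Q (Suc m + r) \<omega> = j)}"

lemma Rset_sets[measurable]: "Rset j m l \<in> sets M"
  unfolding Rset_def by measurable

lemma prob_Rset: "prob (Rset j m l) = prob (Rset j m 0) * p j j ^ l"
proof -
  have "Rset j m l = {\<omega>\<in>space M. Bfe j (pref \<omega> m) \<and> Q m \<omega> = j \<and>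
      (\<forall>r<length (replicate l j). Q (Suc m + r) \<omega> = replicate l j ! r)}"
    unfolding Rset_def by auto
  moreover have "Rset j m 0 = {\<omega>\<in>space M. Bfe j (pref \<omega> m) \<and> Q m \<omega> = j}"
    unfolding Rset_def by auto
  ultimately show ?thesis using markov_prefix[of "Bfe j" m j "replicate l j"] by (simp add: chp_replicate)
qed

lemma Bfe_pref: "Bfe j (pref \<omega> m) \<longleftrightarrow> m = 0 \<or> Q (m - 1) \<omega> \<noteq> j"
  unfolding Bfe_def pref_def by (cases m) auto

lemma good_first:
  assumes g: "good \<omega>" and t: "Q t \<omega> = j"
  obtains m where "Q m \<omega> = j" "m = 0 \<or> Q (m - 1) \<omega> \<noteq> j" "m \<le> t"
proof -
  define m where "m = (LEAST t. Q t \<omega> = j)"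
  have "Q m \<omega> = j" unfolding m_def using t by (rule LeastI)
  moreover have "m \<le> t" unfolding m_def using t by (rule Least_le)
  moreover have "m = 0 \<or> Q (m - 1) \<omega> \<noteq> j"
  proof (cases m)
    case (Suc k)
    have "\<not> Q k \<omega> = j" using not_less_Least[of k "\<lambda>t. Q t \<omega> = j"] Suc unfolding m_def by auto
    then show ?thesis using Suc by simp
  qed simp
  ultimately show ?thesis using that by blast
qed

lemma first_unique:
  assumes g: "good \<omega>" and a: "Q m \<omega> = j" "m = 0 \<or> Q (m - 1) \<omega> \<noteq> j"
    and b: "Q m' \<omega> = j" "m' = 0 \<or> Q (m' - 1) \<omega> \<noteq> j"
  shows "m = m'"
proof -
  have False if "m < m'" "Q m \<omega> = j" "Q m' \<omega> = j" "m' = 0 \<or> Q (m' - 1) \<omega> \<noteq> j" for m m'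
  proof -
    have "m \<le> m' - 1" "m' - 1 \<le> m'" using that by auto
    then have "Q m \<omega> \<le> Q (m' - 1) \<omega>" "Q (m' - 1) \<omega> \<le> Q m' \<omega>" using good_mono[OF g] by blast+
    then show False using that by auto
  qed
  then show ?thesis using a b by (metis linorder_neqE_nat)
qed

lemma visits_block:
  assumes g: "good \<omega>" and m: "Q m \<omega> = j" "m = 0 \<or> Q (m - 1) \<omega> \<noteq> j"
    and L: "\<And>r. r < L \<Longrightarrow> Q (m + r) \<omega> = j" "Q (m + L) \<omega> \<noteq> j"
  shows "{t. Q t \<omega> = j} = {m..<m + L}"
proof (intro equalityI subsetI)
  fix t assume t: "t \<in> {t. Q t \<omega> = j}"
  have "\<not> t < m"
  proof
    assume "t < m"
    then have "t \<le> m - 1" "m - 1 \<le> m" by auto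
    then have "Q t \<omega> \<le> Q (m - 1) \<omega>" "Q (m - 1) \<omega> \<le> Q m \<omega>" using good_mono[OF g] by blast+
    then show False using t m \<open>t < m\<close> by auto
  qed
  moreover have "\<not> t \<ge> m + L"
  proof
    assume "t \<ge> m + L"
    then have "Q (m + L) \<omega> \<le> Q t \<omega>" "Q m \<omega> \<le> Q (m + L) \<omega>" using good_mono[OF g] by simp_all
    then show False using t m L by auto
  qed
  ultimately show "t \<in> {m..<m + L}" by auto
next
  fix t assume "t \<in> {m..<m + L}"
  then have "t = m + (t - m)" "t - m < L" by auto
  then show "t \<in> {t. Q t \<omega> = j}" using L(1)[of "t - m"] by simp
qed

lemma sums_first: assumes j: "j \<ge> 1"
  shows "(\<lambda>m. prob (Rset j m 0)) sums hh j"
  unfolding hit_prob_def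
proof (rule sums_AE)
  show "{\<omega> \<in> space M. 1 \<le> visits Q j \<omega>} \<in> sets M" using visits_sets'[OF j] .
  show "AE \<omega> in M. \<forall>n m. \<omega> \<in> Rset j n 0 \<longrightarrow> \<omega> \<in> Rset j m 0 \<longrightarrow> n = m"
    using AE_good
  proof (eventually_elim, intro allI impI)
    fix \<omega> n m assume g: "good \<omega>" and a: "\<omega> \<in> Rset j n 0" and b: "\<omega> \<in> Rset j m 0"
    from a b have "Q n \<omega> = j" "n = 0 \<or> Q (n - 1) \<omega> \<noteq> j" "Q m \<omega> = j" "m = 0 \<or> Q (m - 1) \<omega> \<noteq> j"
      unfolding Rset_def Bfe_pref by auto
    then show "n = m" by (rule first_unique[OF g])
  qed
  show "AE \<omega> in M. (\<omega> \<in> {\<omega> \<in> space M. 1 \<le> visits Q j \<omega>}) = (\<exists>n. \<omega> \<in> Rset j n 0)"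
    using AE_good
  proof eventually_elim
    case (elim \<omega>)
    have sp: "\<omega> \<in> space M" using elim good_def by auto
    show ?case
    proof
      assume "\<omega> \<in> {\<omega> \<in> space M. 1 \<le> visits Q j \<omega>}"
      then obtain t where "Q t \<omega> = j" by (auto simp: visits_ge1)
      from good_first[OF elim this] obtain m where "Q m \<omega> = j" "m = 0 \<or> Q (m - 1) \<omega> \<noteq> j" by blast
      then have "\<omega> \<in> Rset j m 0" using sp unfolding Rset_def Bfe_pref by auto
      then show "\<exists>n. \<omega> \<in> Rset j n 0" by blast
    next
      assume "\<exists>n. \<omega> \<in> Rset j n 0"
      then show "\<omega> \<in> {\<omega> \<in> space M. 1 \<le> visits Q j \<omega>}" using sp unfolding Rset_def
        by (auto simp: visits_ge1)
    qed
  qed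
qed (rule Rset_sets)

lemma Rset_mono: "Rset j m (Suc l) \<subseteq> Rset j m l"
  unfolding Rset_def by auto

lemma sums_visits: assumes j: "j \<ge> 1" and n: "n \<ge> 1"
  shows "(\<lambda>m. prob (Rset j m (n - 1) - Rset j m n)) sums prob {\<omega>\<in>space M. visits Q j \<omega> = enat n}"
proof (rule sums_AE)
  show "{\<omega>\<in>space M. visits Q j \<omega> = enat n} \<in> sets M" using visits_sets'[OF j] .
  show "\<And>m. Rset j m (n - 1) - Rset j m n \<in> sets M" by (intro sets.Diff Rset_sets)
  show "AE \<omega> in M. \<forall>a b. \<omega> \<in> Rset j a (n - 1) - Rset j a n \<longrightarrow> \<omega> \<in> Rset j b (n - 1) - Rset j b n \<longrightarrow> a = b"
    using AE_good
  proof (eventually_elim, intro allI impI)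
    fix \<omega> a b assume g: "good \<omega>" and x: "\<omega> \<in> Rset j a (n - 1) - Rset j a n" and y: "\<omega> \<in> Rset j b (n - 1) - Rset j b n"
    from x y have "Q a \<omega> = j" "a = 0 \<or> Q (a - 1) \<omega> \<noteq> j" "Q b \<omega> = j" "b = 0 \<or> Q (b - 1) \<omega> \<noteq> j"
      unfolding Rset_def Bfe_pref by auto
    then show "a = b" by (rule first_unique[OF g])
  qed
  show "AE \<omega> in M. (\<omega> \<in> {\<omega>\<in>space M. visits Q j \<omega> = enat n}) = (\<exists>m. \<omega> \<in> Rset j m (n - 1) - Rset j m n)"
    using AE_good
  proof eventually_elim
    case (elim \<omega>)
    have sp: "\<omega> \<in> space M" using elim good_def by auto
    show ?case
    proof
      assume "\<omega> \<in> {\<omega>\<in>space M. visits Q j \<omega> = enat n}"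
      then have fin: "finite {t. Q t \<omega> = j}" and card: "card {t. Q t \<omega> = j} = n"
        by (auto simp: visits_eq)
      then have "{t. Q t \<omega> = j} \<noteq> {}" using n by (metis card.empty not_one_le_zero)
      then obtain t where "Q t \<omega> = j" by auto
      from good_first[OF elim this] obtain m where m: "Q m \<omega> = j" "m = 0 \<or> Q (m - 1) \<omega> \<noteq> j" by blast
      have "\<exists>r. Q (m + r) \<omega> \<noteq> j"
      proof (rule ccontr)
        assume "\<not> (\<exists>r. Q (m + r) \<omega> \<noteq> j)"
        then have "Q t \<omega> = j" if "t \<ge> m" for t using that le_Suc_ex[of m t] by (metis le_add_diff_inverse)
        then have "{m..} \<subseteq> {t. Q t \<omega> = j}" by auto
        then show False using fin infinite_Ici finite_subset by blast
      qed
      define L where "L = (LEAST r. Q (m + r) \<omega> \<noteq> j)"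
      have L1: "Q (m + L) \<omega> \<noteq> j" unfolding L_def using \<open>\<exists>r. Q (m + r) \<omega> \<noteq> j\<close> by (rule LeastI_ex)
      have L2: "Q (m + r) \<omega> = j" if "r < L" for r using not_less_Least[of r] that unfolding L_def by blast
      have "{t. Q t \<omega> = j} = {m..<m + L}" by (rule visits_block[OF elim m L2 L1])
      then have "L = n" using card by simp
      have "Q (Suc m + r) \<omega> = j" if "r < n - 1" for r
        using L2[of "Suc r"] that \<open>L = n\<close> by simp
      then have "\<omega> \<in> Rset j m (n - 1)"
        unfolding Rset_def Bfe_pref using sp m by auto
      moreover have "\<omega> \<notin> Rset j m n"
      proof
        assume "\<omega> \<in> Rset j m n"
        then have all: "\<forall>r<n. Q (Suc m + r) \<omega> = j" unfolding Rset_def by blast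
        have "n - 1 < n" using n by simp
        with all have "Q (Suc m + (n - 1)) \<omega> = j" by blast
        moreover have "Suc m + (n - 1) = m + L" using n \<open>L = n\<close> by simp
        ultimately show False using L1 by metis
      qed
      ultimately show "\<exists>m. \<omega> \<in> Rset j m (n - 1) - Rset j m n" by blast
    next
      assume "\<exists>m. \<omega> \<in> Rset j m (n - 1) - Rset j m n"
      then obtain m where a: "\<omega> \<in> Rset j m (n - 1)" and b: "\<omega> \<notin> Rset j m n" by blast
      have m: "Q m \<omega> = j" "m = 0 \<or> Q (m - 1) \<omega> \<noteq> j" using a unfolding Rset_def Bfe_pref by auto
      have run: "Q (Suc m + r) \<omega> = j" if "r < n - 1" for r using a that unfolding Rset_def by auto
      have L2: "Q (m + r) \<omega> = j" if "r < n" for r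
      proof (cases r)
        case 0 then show ?thesis using m by simp
      next
        case (Suc r') then show ?thesis using run[of r'] that by simp
      qed
      have L1: "Q (m + n) \<omega> \<noteq> j"
      proof
        assume "Q (m + n) \<omega> = j"
        then have "Q (Suc m + r) \<omega> = j" if "r < n" for r
        proof (cases "r < n - 1")
          case True then show ?thesis using run by simp
        next
          case False then have "Suc m + r = m + n" using that by simp
          then show ?thesis using \<open>Q (m + n) \<omega> = j\<close> by metis
        qed
        then have "\<omega> \<in> Rset j m n" using a unfolding Rset_def by auto
        then show False using b by simp
      qed
      have "{t. Q t \<omega> = j} = {m..<m + n}" by (rule visits_block[OF elim m L2 L1])
      then show "\<omega> \<in> {\<omega>\<in>space M. visits Q j \<omega> = enat n}" using sp by (simp add: visits_eq)
    qed
  qed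
qed

lemma prob_visits_n: assumes j: "j \<ge> 1" and n: "n \<ge> 1"
  shows "prob {\<omega>\<in>space M. visits Q j \<omega> = enat n} = hh j * (1 - p j j) * p j j ^ (n - 1)"
proof -
  have "prob (Rset j m (n - 1) - Rset j m n) = prob (Rset j m 0) * ((1 - p j j) * p j j ^ (n - 1))" for m
  proof -
    have sub: "Rset j m n \<subseteq> Rset j m (n - 1)" using Rset_mono[of j m "n - 1"] n by simp
    have "prob (Rset j m (n - 1) - Rset j m n) = prob (Rset j m (n - 1)) - prob (Rset j m n)"
      by (rule finite_measure_Diff[OF _ _ sub]) auto
    also have "\<dots> = prob (Rset j m 0) * (p j j ^ (n - 1) - p j j ^ n)"
      by (subst (1 2) prob_Rset) (simp add: algebra_simps)
    also have "p j j ^ (n - 1) - p j j ^ n = (1 - p j j) * p j j ^ (n - 1)"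
      using n by (cases n) (auto simp: algebra_simps)
    finally show ?thesis .
  qed
  then have "(\<lambda>m. prob (Rset j m 0) * ((1 - p j j) * p j j ^ (n - 1))) sums prob {\<omega>\<in>space M. visits Q j \<omega> = enat n}"
    using sums_visits[OF j n] by simp
  moreover have "(\<lambda>m. prob (Rset j m 0) * ((1 - p j j) * p j j ^ (n - 1))) sums (hh j * ((1 - p j j) * p j j ^ (n - 1)))"
    by (rule sums_mult2[OF sums_first[OF j]])
  ultimately show ?thesis using sums_unique2 by (simp add: mult.assoc)
qed

end


lemma zero_path:
  fixes P :: "nat \<Rightarrow> nat \<Rightarrow> real"
  assumes "P0 0 = 0" "\<And>i. i \<ge> 1 \<Longrightarrow> P i 0 = 0" "k \<le> n" "s k = 0"
  shows "P0 (s 0) * (\<Prod>k<n. P (s k) (s (Suc k))) = 0"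
proof -
  define k0 where "k0 = (LEAST k. s k = 0)"
  have sk0: "s k0 = 0" unfolding k0_def using assms(4) by (rule LeastI)
  have k0n: "k0 \<le> n" unfolding k0_def using assms(3,4) Least_le[of "\<lambda>k. s k = 0" k] by simp
  show ?thesis
  proof (cases k0)
    case 0 then show ?thesis using sk0 assms(1) by simp
  next
    case (Suc l)
    have "s l \<noteq> 0" using not_less_Least[of l "\<lambda>k. s k = 0"] Suc unfolding k0_def by auto
    then have "P (s l) (s (Suc l)) = 0" using Suc sk0 assms(2)[of "s l"] by simp
    moreover have "l \<in> {..<n}" using Suc k0n by simp
    ultimately have "(\<Prod>k<n. P (s k) (s (Suc k))) = 0" by (intro prod_zero) auto
    then show ?thesis by simp
  qed
qed

context rc begin

lemma p0_pos: "i \<ge> 1 \<Longrightarrow> p0 i > 0"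
  using hh_formula[of i] hh_pos[of i] tail_pos[of i] by (simp add: zero_less_divide_iff)

lemma law_iff: "markov_chain_law M Q p0 W \<longleftrightarrow> (\<forall>i\<ge>1. \<forall>j. W i j = p i j)"
proof
  assume W: "markov_chain_law M Q p0 W"
  show "\<forall>i\<ge>1. \<forall>j. W i j = p i j"
  proof (intro allI impI)
    fix i j :: nat assume i: "i \<ge> 1"
    define s where "s k = (if k = 0 then i else j)" for k :: nat
    have "p0 (s 0) * (\<Prod>k<1. W (s k) (s (Suc k))) = p0 (s 0) * (\<Prod>k<1. p (s k) (s (Suc k)))"
      using W[unfolded markov_chain_law_def, rule_format, of 1 s] markov[unfolded markov_chain_law_def, rule_format, of 1 s]
      by simp
    then have "p0 i * W i j = p0 i * p i j" by (simp add: s_def)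
    then show "W i j = p i j" using p0_pos[OF i] by simp
  qed
next
  assume eq: "\<forall>i\<ge>1. \<forall>j. W i j = p i j"
  have W0: "W i 0 = 0" if "i \<ge> 1" for i using eq p_incr[of i 0] that by simp
  show "markov_chain_law M Q p0 W"
    unfolding markov_chain_law_def
  proof (intro allI)
    fix n and s :: "nat \<Rightarrow> nat"
    have "p0 (s 0) * (\<Prod>k<n. W (s k) (s (Suc k))) = p0 (s 0) * (\<Prod>k<n. p (s k) (s (Suc k)))"
    proof (cases "\<exists>k\<le>n. s k = 0")
      case True
      then obtain k where "k \<le> n" "s k = 0" by blast
      have p00: "p i 0 = 0" if "i \<ge> 1" for i using p_incr[OF that, of 0] that by simp
      have z1: "p0 (s 0) * (\<Prod>k<n. W (s k) (s (Suc k))) = 0"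
        by (rule zero_path[of p0 W k n s]) (use p0_zero W0 \<open>k \<le> n\<close> \<open>s k = 0\<close> in auto)
      have z2: "p0 (s 0) * (\<Prod>k<n. p (s k) (s (Suc k))) = 0"
        by (rule zero_path[of p0 p k n s]) (use p0_zero p00 \<open>k \<le> n\<close> \<open>s k = 0\<close> in auto)
      show ?thesis using z1 z2 by (simp only:)
    next
      case False
      have ge: "s k \<ge> 1" if "k < n" for k
      proof -
        have "s k \<noteq> 0" using False that by auto
        then show ?thesis by simp
      qed
      have "W (s k) (s (Suc k)) = p (s k) (s (Suc k))" if "k \<in> {..<n}" for k
        using eq ge[of k] that by simp
      then have "(\<Prod>k<n. W (s k) (s (Suc k))) = (\<Prod>k<n. p (s k) (s (Suc k)))"
        by (rule prod.cong[OF refl])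
      then show ?thesis by simp
    qed
    then show "measure M {\<omega> \<in> space M. \<forall>k\<le>n. Q k \<omega> = s k} = p0 (s 0) * (\<Prod>k<n. W (s k) (s (Suc k)))"
      using markov[unfolded markov_chain_law_def, rule_format, of n s] by (simp only:)
  qed
qed

lemma weak_iff: "(\<forall>i\<ge>1. p i i = hh i) \<longleftrightarrow> markov_chain_law M Q p0 (weak_record_matrix p0)"
  unfolding law_iff
proof
  assume a: "\<forall>i\<ge>1. p i i = hh i"
  show "\<forall>i\<ge>1. \<forall>j. weak_record_matrix p0 i j = p i j"
  proof (intro allI impI)
    fix i j :: nat assume i: "i \<ge> 1"
    consider "j < i" | "j = i" | "i < j" by linarith
    then show "weak_record_matrix p0 i j = p i j"
    proof cases
      case 1 then show ?thesis using p_incr[OF i] by (simp add: weak_record_matrix_def)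
    next
      case 2 then show ?thesis using a i hh_formula[OF i] by (simp add: weak_record_matrix_def)
    next
      case 3
      have "p i j = (1 - hh i) * p0 j / tail p0 (Suc i)" using pij_formula2[OF i 3] a i by simp
      also have "\<dots> = tail p0 (Suc i) / tail p0 i * p0 j / tail p0 (Suc i)" using one_minus_hh[OF i] by simp
      also have "\<dots> = p0 j / tail p0 i" using tail_pos[of "Suc i"] by simp
      finally show ?thesis using 3 by (simp add: weak_record_matrix_def)
    qed
  qed
next
  assume a: "\<forall>i\<ge>1. \<forall>j. weak_record_matrix p0 i j = p i j"
  show "\<forall>i\<ge>1. p i i = hh i"
  proof (intro allI impI)
    fix i :: nat assume i: "i \<ge> 1"
    have "weak_record_matrix p0 i i = p i i" using a i by blast
    then show "p i i = hh i" using hh_formula[OF i] by (simp add: weak_record_matrix_def)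
  qed
qed

lemma strict_iff: "(\<forall>i\<ge>1. p i i = 0) \<longleftrightarrow> markov_chain_law M Q p0 (strict_record_matrix p0)"
  unfolding law_iff
proof
  assume a: "\<forall>i\<ge>1. p i i = 0"
  show "\<forall>i\<ge>1. \<forall>j. strict_record_matrix p0 i j = p i j"
  proof (intro allI impI)
    fix i j :: nat assume i: "i \<ge> 1"
    consider "j < i" | "j = i" | "i < j" by linarith
    then show "strict_record_matrix p0 i j = p i j"
    proof cases
      case 1 then show ?thesis using p_incr[OF i] by (simp add: strict_record_matrix_def)
    next
      case 2 then show ?thesis using a i by (simp add: strict_record_matrix_def)
    next
      case 3 then show ?thesis using pij_formula2[OF i 3] a i by (simp add: strict_record_matrix_def)
    qed
  qed
next
  assume a: "\<forall>i\<ge>1. \<forall>j. strict_record_matrix p0 i j = p i j"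
  show "\<forall>i\<ge>1. p i i = 0"
  proof (intro allI impI)
    fix i :: nat assume i: "i \<ge> 1"
    have "strict_record_matrix p0 i i = p i i" using a i by blast
    then show "p i i = 0" by (simp add: strict_record_matrix_def)
  qed
qed

lemma prob_visits_geom: "j \<ge> 1 \<Longrightarrow> prob {\<omega>\<in>space M. visits Q j \<omega> = enat n} =
    (if n = 0 then 1 - hh j else hh j * (1 - p j j) * p j j ^ (n - 1))"
  using prob_visits_n[of j n] prob_visits0[of j] by (auto simp: zero_enat_def[symmetric])

lemma geom_iff: "(\<forall>i\<ge>1. p i i = hh i) \<longleftrightarrow> (\<forall>j\<ge>1. \<exists>q. 0 \<le> q \<and> q < 1 \<and>
                 (\<forall>n::nat. measure M {\<omega> \<in> space M. visits Q j \<omega> = enat n} = (1 - q) * q ^ n))"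
proof
  assume a: "\<forall>i\<ge>1. p i i = hh i"
  show "\<forall>j\<ge>1. \<exists>q. 0 \<le> q \<and> q < 1 \<and> (\<forall>n::nat. prob {\<omega> \<in> space M. visits Q j \<omega> = enat n} = (1 - q) * q ^ n)"
  proof (intro allI impI)
    fix j :: nat assume j: "j \<ge> 1"
    have "\<forall>n. prob {\<omega> \<in> space M. visits Q j \<omega> = enat n} = (1 - hh j) * hh j ^ n"
    proof
      fix n show "prob {\<omega> \<in> space M. visits Q j \<omega> = enat n} = (1 - hh j) * hh j ^ n"
        using a j by (cases n) (auto simp: prob_visits_geom)
    qed
    moreover have "hh j < 1" using a j pii_lt1[OF j] by simp
    ultimately show "\<exists>q. 0 \<le> q \<and> q < 1 \<and> (\<forall>n::nat. prob {\<omega> \<in> space M. visits Q j \<omega> = enat n} = (1 - q) * q ^ n)"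
      by (intro exI[of _ "hh j"]) (auto simp: hit_prob_def)
  qed
next
  assume b: "\<forall>j\<ge>1. \<exists>q. 0 \<le> q \<and> q < 1 \<and> (\<forall>n::nat. prob {\<omega> \<in> space M. visits Q j \<omega> = enat n} = (1 - q) * q ^ n)"
  show "\<forall>i\<ge>1. p i i = hh i"
  proof (intro allI impI)
    fix i :: nat assume i: "i \<ge> 1"
    obtain q where q: "\<And>n. prob {\<omega> \<in> space M. visits Q i \<omega> = enat n} = (1 - q) * q ^ n"
      using b i by blast
    have "1 - hh i = 1 - q" using q[of 0] prob_visits_geom[OF i, of 0] by simp
    then have qh: "q = hh i" by simp
    have "prob {\<omega> \<in> space M. visits Q i \<omega> = enat 1} = hh i * (1 - p i i)"
      using prob_visits_geom[OF i, of 1] by simp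
    moreover have "prob {\<omega> \<in> space M. visits Q i \<omega> = enat 1} = (1 - hh i) * hh i"
      using q[of 1] qh by simp
    ultimately have "hh i * (1 - p i i) = (1 - hh i) * hh i" by simp
    then have "hh i * (1 - p i i) = hh i * (1 - hh i)" by (simp add: mult.commute)
    then have "1 - p i i = 1 - hh i" using hh_pos[OF i] by simp
    then show "p i i = hh i" by simp
  qed
qed

lemma enat_le1: "x \<le> (1::enat) \<longleftrightarrow> x = enat 0 \<or> x = enat 1"
  by (cases x) (auto simp: one_enat_def)

lemma bern_iff: "(\<forall>i\<ge>1. p i i = 0) \<longleftrightarrow> (\<forall>j\<ge>1. measure M {\<omega> \<in> space M. visits Q j \<omega> \<le> 1} = 1)"
proof -
  have eq: "prob {\<omega> \<in> space M. visits Q j \<omega> \<le> 1} = 1 - hh j * p j j" if j: "j \<ge> 1" for j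
  proof -
    have "{\<omega> \<in> space M. visits Q j \<omega> \<le> 1} = {\<omega> \<in> space M. visits Q j \<omega> = enat 0} \<union> {\<omega> \<in> space M. visits Q j \<omega> = enat 1}"
      by (auto simp: enat_le1)
    moreover have "prob ({\<omega> \<in> space M. visits Q j \<omega> = enat 0} \<union> {\<omega> \<in> space M. visits Q j \<omega> = enat 1}) =
        prob {\<omega> \<in> space M. visits Q j \<omega> = enat 0} + prob {\<omega> \<in> space M. visits Q j \<omega> = enat 1}"
      using j by (intro finite_measure_Union visits_sets') auto
    ultimately show ?thesis using prob_visits_geom[OF j, of 0] prob_visits_geom[OF j, of 1] by (simp add: algebra_simps)
  qed
  show ?thesis
  proof
    assume "\<forall>i\<ge>1. p i i = 0"
    then show "\<forall>j\<ge>1. prob {\<omega> \<in> space M. visits Q j \<omega> \<le> 1} = 1" using eq by simp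
  next
    assume a: "\<forall>j\<ge>1. prob {\<omega> \<in> space M. visits Q j \<omega> \<le> 1} = 1"
    show "\<forall>i\<ge>1. p i i = 0"
    proof (intro allI impI)
      fix i :: nat assume i: "i \<ge> 1"
      have "hh i * p i i = 0" using a eq[OF i] i by simp
      then show "p i i = 0" using hh_pos[OF i] by simp
    qed
  qed
qed

end


definition smono :: "nat \<Rightarrow> (nat \<Rightarrow> nat) \<Rightarrow> bool" where
  "smono m s \<longleftrightarrow> (\<forall>k<m. s k < s (Suc k))"

lemma smono_lt: "smono m s \<Longrightarrow> l < k \<Longrightarrow> k \<le> m \<Longrightarrow> s l < s k"
proof (induction k)
  case 0 then show ?case by simp
next
  case (Suc k)
  have "s k < s (Suc k)" using Suc.prems unfolding smono_def by auto
  then show ?case using Suc by (cases "l = k") auto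
qed

lemma smono_le: "smono m s \<Longrightarrow> l \<le> k \<Longrightarrow> k \<le> m \<Longrightarrow> s l \<le> s k"
  using smono_lt[of m s l k] by (cases "l = k") auto

lemma smono_lt_iff: "smono m s \<Longrightarrow> l \<le> m \<Longrightarrow> k \<le> m \<Longrightarrow> s l < s k \<longleftrightarrow> l < k"
  using smono_lt[of m s l k] smono_le[of m s k l] by (metis not_le)

lemma smono_Suc: "smono (Suc m) s \<Longrightarrow> smono m s"
  unfolding smono_def by auto

lemma enum_below:
  fixes S :: "nat set" assumes inf: "infinite S"
  shows "S \<inter> {..<enumerate S n} = enumerate S ` {..<n}"
proof (intro equalityI subsetI)
  fix x assume x: "x \<in> S \<inter> {..<enumerate S n}"
  then obtain k where k: "enumerate S k = x" using enumerate_Ex[OF inf] by blast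
  then have "k < n" using x inf by auto
  then show "x \<in> enumerate S ` {..<n}" using k by auto
next
  fix x assume "x \<in> enumerate S ` {..<n}"
  then obtain k where "k < n" "x = enumerate S k" by auto
  then show "x \<in> S \<inter> {..<enumerate S n}" using inf enumerate_in_set[OF inf] by auto
qed

lemma enum_char:
  fixes S :: "nat set" assumes inf: "infinite S"
  shows "(\<forall>k\<le>m. enumerate S k = s k) \<longleftrightarrow> smono m s \<and> S \<inter> {..s m} = s ` {..m}"
proof
  assume e: "\<forall>k\<le>m. enumerate S k = s k"
  have "smono m s" unfolding smono_def
  proof (intro allI impI)
    fix k assume "k < m"
    then show "s k < s (Suc k)" using e inf by (metis Suc_leI enumerate_step less_imp_le_nat)
  qed
  moreover have "S \<inter> {..s m} = s ` {..m}"
  proof (intro equalityI subsetI)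
    fix x assume x: "x \<in> S \<inter> {..s m}"
    then obtain k where k: "enumerate S k = x" using enumerate_Ex[OF inf] by blast
    have "enumerate S k \<le> enumerate S m" using x k e by auto
    then have "k \<le> m" using inf by simp
    then show "x \<in> s ` {..m}" using k e by auto
  next
    fix x assume "x \<in> s ` {..m}"
    then obtain k where k: "k \<le> m" "x = s k" by auto
    then have "x = enumerate S k" using e by simp
    moreover have "enumerate S k \<le> enumerate S m" using k inf by simp
    ultimately show "x \<in> S \<inter> {..s m}" using k e enumerate_in_set[OF inf, of k] by auto
  qed
  ultimately show "smono m s \<and> S \<inter> {..s m} = s ` {..m}" by blast
next
  assume a: "smono m s \<and> S \<inter> {..s m} = s ` {..m}"
  then have sm: "smono m s" and eq: "S \<inter> {..s m} = s ` {..m}" by auto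
  show "\<forall>k\<le>m. enumerate S k = s k"
  proof (intro allI impI)
    fix k assume km: "k \<le> m"
    have skS: "s k \<in> S" using eq km smono_le[OF sm km] by (metis IntD1 atMost_iff imageI order_refl)
    then obtain n where n: "enumerate S n = s k" using enumerate_Ex[OF inf] by blast
    have "S \<inter> {..<s k} = s ` {..<k}"
    proof (intro equalityI subsetI)
      fix x assume x: "x \<in> S \<inter> {..<s k}"
      then have "x \<in> S \<inter> {..s m}" using smono_le[OF sm km] by auto
      then obtain l where l: "l \<le> m" "x = s l" using eq by auto
      then have "l < k" using x smono_lt_iff[OF sm l(1) km] by auto
      then show "x \<in> s ` {..<k}" using l by auto
    next
      fix x assume "x \<in> s ` {..<k}"
      then obtain l where l: "l < k" "x = s l" by auto
      then have "x \<in> s ` {..m}" "x < s k" using km smono_lt[OF sm l(1) km] by auto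
      then show "x \<in> S \<inter> {..<s k}" using eq by auto
    qed
    moreover have "S \<inter> {..<s k} = enumerate S ` {..<n}" using enum_below[OF inf, of n] n by simp
    ultimately have "s ` {..<k} = enumerate S ` {..<n}" by simp
    then have "card (s ` {..<k}) = card (enumerate S ` {..<n})" by simp
    moreover have "inj_on s {..<k}" unfolding inj_on_def
      using smono_lt_iff[OF sm] km by (metis lessThan_iff linorder_neqE_nat less_imp_le_nat order.strict_trans2 less_irrefl)
    moreover have "inj_on (enumerate S) {..<n}" using inj_enumerate[OF inf] by (rule inj_on_subset) auto
    ultimately have "k = n" by (simp add: card_image)
    then show "enumerate S k = s k" using n by simp
  qed
qed


context rc begin

definition RR :: "'a \<Rightarrow> nat set" where "RR \<omega> = range (\<lambda>t. Q t \<omega>)"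

lemma good_inf: "good \<omega> \<Longrightarrow> infinite (RR \<omega>)"
proof
  assume g: "good \<omega>" and fin: "finite (RR \<omega>)"
  have sp: "\<omega> \<in> space M" using g good_def by auto
  have "UNIV = (\<Union>r\<in>RR \<omega>. {t. Q t \<omega> = r})" unfolding RR_def by auto
  moreover have "finite {t. Q t \<omega> = r}" if "r \<in> RR \<omega>" for r
    using that g Q_pos[OF sp] unfolding good_def RR_def by auto
  ultimately have "finite (UNIV :: nat set)" using fin by (metis finite_UN_I)
  then show False by simp
qed

lemma jump_RR: "jump_chain Q k \<omega> = enumerate (RR \<omega>) k"
  unfolding jump_chain_def RR_def ..

definition Wset :: "nat \<Rightarrow> (nat \<Rightarrow> nat) \<Rightarrow> 'a set" where
  "Wset n s = {\<omega>\<in>space M. \<forall>k\<le>n. jump_chain Q k \<omega> = s k}"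

definition W1 :: "nat \<Rightarrow> (nat \<Rightarrow> nat) \<Rightarrow> 'a set" where
  "W1 n s = {\<omega>\<in>space M. \<not> (\<exists>N::nat. \<forall>t. Q t \<omega> \<le> N) \<and> smono n s \<and>
     (\<forall>y. y \<le> s n \<longrightarrow> ((\<exists>t. Q t \<omega> = y) \<longleftrightarrow> y \<in> s ` {..n}))}"

lemma W1_sets: "W1 n s \<in> sets M"
  unfolding W1_def by measurable

lemma RR_fin_iff: "finite (RR \<omega>) \<longleftrightarrow> (\<exists>N::nat. \<forall>t. Q t \<omega> \<le> N)"
  unfolding RR_def finite_nat_set_iff_bounded_le by auto

lemma Wset_split: "Wset n s = W1 n s \<union>
   (\<Union>A\<in>{A. finite A \<and> (\<forall>k\<le>n. enumerate A k = s k)}. {\<omega>\<in>space M. (\<forall>t. Q t \<omega> \<in> A) \<and> (\<forall>a. a \<in> A \<longrightarrow> (\<exists>t. Q t \<omega> = a))})"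
proof -
  have RRA: "(\<forall>t. Q t \<omega> \<in> A) \<and> (\<forall>a. a \<in> A \<longrightarrow> (\<exists>t. Q t \<omega> = a)) \<longleftrightarrow> RR \<omega> = A" for \<omega> A
    unfolding RR_def by auto
  have "\<omega> \<in> Wset n s \<longleftrightarrow> \<omega> \<in> W1 n s \<or> (\<omega> \<in> space M \<and> finite (RR \<omega>) \<and> (\<forall>k\<le>n. enumerate (RR \<omega>) k = s k))" for \<omega>
  proof (cases "finite (RR \<omega>)")
    case True
    then show ?thesis unfolding Wset_def W1_def jump_RR using RR_fin_iff[of \<omega>] by auto
  next
    case False
    have "(\<forall>k\<le>n. enumerate (RR \<omega>) k = s k) \<longleftrightarrow> smono n s \<and> RR \<omega> \<inter> {..s n} = s ` {..n}"
      by (rule enum_char[OF False])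
    also have "\<dots> \<longleftrightarrow> smono n s \<and> (\<forall>y. y \<le> s n \<longrightarrow> ((\<exists>t. Q t \<omega> = y) \<longleftrightarrow> y \<in> s ` {..n}))"
    proof (cases "smono n s")
      case True
      have sub: "s ` {..n} \<subseteq> {..s n}" using smono_le[OF True] by auto
      have "RR \<omega> \<inter> {..s n} = s ` {..n} \<longleftrightarrow> (\<forall>y. y \<le> s n \<longrightarrow> (y \<in> RR \<omega> \<longleftrightarrow> y \<in> s ` {..n}))"
        using sub by blast
      moreover have "y \<in> RR \<omega> \<longleftrightarrow> (\<exists>t. Q t \<omega> = y)" for y unfolding RR_def by auto
      ultimately show ?thesis using True by simp
    qed simp
    finally show ?thesis unfolding Wset_def W1_def jump_RR using RR_fin_iff[of \<omega>] False by auto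
  qed
  then show ?thesis by (auto simp: RRA)
qed

lemma Wset_sets: "Wset n s \<in> sets M"
proof -
  have "countable {A::nat set. finite A \<and> (\<forall>k\<le>n. enumerate A k = s k)}"
    by (rule countable_subset[OF _ countable_Collect_finite]) auto
  moreover have "{\<omega>\<in>space M. (\<forall>t. Q t \<omega> \<in> A) \<and> (\<forall>a. a \<in> A \<longrightarrow> (\<exists>t. Q t \<omega> = a))} \<in> sets M" for A :: "nat set"
    by measurable
  ultimately show ?thesis unfolding Wset_split using W1_sets
    by (intro sets.Un sets.countable_UN'') auto
qed

lemma prob_Wset: "prob (Wset n s) = prob (W1 n s)"
proof (rule measure_eq_AE[OF _ Wset_sets W1_sets])
  show "AE \<omega> in M. (\<omega> \<in> Wset n s) = (\<omega> \<in> W1 n s)"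
    using AE_good
  proof eventually_elim
    case (elim \<omega>)
    then have "\<not> finite (RR \<omega>)" using good_inf by blast
    have "\<omega> \<notin> (\<Union>A\<in>{A. finite A \<and> (\<forall>k\<le>n. enumerate A k = s k)}. {\<omega>\<in>space M. (\<forall>t. Q t \<omega> \<in> A) \<and> (\<forall>a. a \<in> A \<longrightarrow> (\<exists>t. Q t \<omega> = a))})"
    proof
      assume "\<omega> \<in> (\<Union>A\<in>{A. finite A \<and> (\<forall>k\<le>n. enumerate A k = s k)}. {\<omega>\<in>space M. (\<forall>t. Q t \<omega> \<in> A) \<and> (\<forall>a. a \<in> A \<longrightarrow> (\<exists>t. Q t \<omega> = a))})"
      then obtain A where "finite A" "\<forall>t. Q t \<omega> \<in> A" by blast
      then have "RR \<omega> \<subseteq> A" unfolding RR_def by auto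
      then show False using \<open>finite A\<close> \<open>\<not> finite (RR \<omega>)\<close> finite_subset by blast
    qed
    then show ?case unfolding Wset_split by blast
  qed
qed

lemma W1_empty: assumes "\<not> (smono n s \<and> s 0 \<ge> 1)" shows "W1 n s = {}"
proof (rule ccontr)
  assume "W1 n s \<noteq> {}"
  then obtain \<omega> where w: "\<omega> \<in> W1 n s" by auto
  then have sm: "smono n s" and sp: "\<omega> \<in> space M" unfolding W1_def by auto
  then have s0: "s 0 = 0" using assms by simp
  have "0 \<le> s n" by simp
  then have "(\<exists>t. Q t \<omega> = 0) \<longleftrightarrow> 0 \<in> s ` {..n}" using w unfolding W1_def by blast
  moreover have "0 \<in> s ` {..n}" using s0 by force
  ultimately obtain t where "Q t \<omega> = 0" by blast
  then show False using Q_pos[OF sp, of t] by simp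
qed

lemma W1_prob_A:
  assumes sm: "smono n s" and s0: "s 0 \<ge> 1"
  shows "prob (W1 n s) = (\<Prod>k\<in>{1..s n}. if k \<in> s ` {..n} then hh k else 1 - hh k)"
proof -
  define S where "S k = (if k \<in> s ` {..n} then {x. x \<ge> (1::enat)} else {0})" for k
  let ?I = "{\<omega>\<in>space M. \<forall>k\<in>{1..s n}. visits Q k \<omega> \<in> S k}"
  have Is: "?I \<in> sets M" by (rule sets.sets_Collect_finite_All, rule visits_sets) auto
  have s1: "s l \<ge> 1" if "l \<le> n" for l using smono_le[OF sm, of 0 l] that s0 by simp
  have "AE \<omega> in M. \<omega> \<in> W1 n s \<longleftrightarrow> \<omega> \<in> ?I"
    using AE_good
  proof eventually_elim
    case (elim \<omega>)
    have sp: "\<omega> \<in> space M" using elim good_def by auto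
    have nf: "\<not> (\<exists>N::nat. \<forall>t. Q t \<omega> \<le> N)" using good_inf[OF elim] RR_fin_iff by blast
    have "\<not> (\<exists>t. Q t \<omega> = 0)" using Q_pos[OF sp] by (metis not_one_le_zero)
    moreover have "0 \<notin> s ` {..n}"
    proof
      assume "0 \<in> s ` {..n}"
      then obtain l where "l \<le> n" "s l = 0" by auto
      then show False using s1[of l] by simp
    qed
    ultimately have y0: "(\<exists>t. Q t \<omega> = 0) \<longleftrightarrow> 0 \<in> s ` {..n}" by blast
    have yk: "visits Q k \<omega> \<in> S k \<longleftrightarrow> ((\<exists>t. Q t \<omega> = k) \<longleftrightarrow> k \<in> s ` {..n})" for k
      unfolding S_def by (auto simp: visits_ge1 visits_0)
    have "\<omega> \<in> W1 n s \<longleftrightarrow> (\<forall>y. y \<le> s n \<longrightarrow> ((\<exists>t. Q t \<omega> = y) \<longleftrightarrow> y \<in> s ` {..n}))"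
      unfolding W1_def using sp nf sm by auto
    also have "\<dots> \<longleftrightarrow> (\<forall>k\<in>{1..s n}. visits Q k \<omega> \<in> S k)"
    proof
      assume "\<forall>y. y \<le> s n \<longrightarrow> ((\<exists>t. Q t \<omega> = y) \<longleftrightarrow> y \<in> s ` {..n})"
      then show "\<forall>k\<in>{1..s n}. visits Q k \<omega> \<in> S k" unfolding yk by auto
    next
      assume a: "\<forall>k\<in>{1..s n}. visits Q k \<omega> \<in> S k"
      show "\<forall>y. y \<le> s n \<longrightarrow> ((\<exists>t. Q t \<omega> = y) \<longleftrightarrow> y \<in> s ` {..n})"
      proof (intro allI impI)
        fix y assume y: "y \<le> s n"
        show "(\<exists>t. Q t \<omega> = y) \<longleftrightarrow> y \<in> s ` {..n}"
        proof (cases "y = 0")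
          case True then show ?thesis using y0 by simp
        next
          case False then have "y \<in> {1..s n}" using y by auto
          then show ?thesis using a yk by blast
        qed
      qed
    qed
    finally show ?case using sp by simp
  qed
  then have "prob (W1 n s) = prob ?I" by (rule measure_eq_AE[OF _ W1_sets Is])
  also have "\<dots> = (\<Prod>k\<in>{1..s n}. prob {\<omega>\<in>space M. visits Q k \<omega> \<in> S k})" by (rule indep_prod) auto
  also have "\<dots> = (\<Prod>k\<in>{1..s n}. if k \<in> s ` {..n} then hh k else 1 - hh k)"
  proof (rule prod.cong[OF refl])
    fix k assume k: "k \<in> {1..s n}"
    show "prob {\<omega>\<in>space M. visits Q k \<omega> \<in> S k} = (if k \<in> s ` {..n} then hh k else 1 - hh k)"
      using prob_visits0[of k] k unfolding S_def hit_prob_def by auto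
  qed
  finally show ?thesis .
qed

lemma alg:
  assumes "smono n s" "s 0 \<ge> 1"
  shows "(\<Prod>k\<in>{1..s n}. if k \<in> s ` {..n} then hh k else 1 - hh k)
       = p0 (s 0) * (\<Prod>k<n. strict_record_matrix p0 (s k) (s (Suc k)))"
  using assms
proof (induction n)
  case 0
  have "{1..s 0} = insert (s 0) {1..<s 0}" using 0 by auto
  then have "(\<Prod>k\<in>{1..s 0}. if k \<in> s ` {..0} then hh k else 1 - hh k)
      = hh (s 0) * (\<Prod>k\<in>{1..<s 0}. if k \<in> s ` {..0} then hh k else 1 - hh k)" by simp
  also have "(\<Prod>k\<in>{1..<s 0}. if k \<in> s ` {..0} then hh k else 1 - hh k) = (\<Prod>k\<in>{1..<s 0}. 1 - hh k)"
    by (intro prod.cong refl) auto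
  finally show ?case using p0_hprod[OF 0(2)] by (simp add: mult.commute)
next
  case (Suc n)
  have sm: "smono (Suc n) s" using Suc.prems by simp
  define a where "a = s n"
  define b where "b = s (Suc n)"
  have ab: "a < b" using sm unfolding smono_def a_def b_def by auto
  have a1: "a \<ge> 1" using smono_le[OF sm, of 0 n] Suc.prems(2) unfolding a_def by simp
  define f where "f k = (if k \<in> s ` {..Suc n} then hh k else 1 - hh k)" for k
  define g where "g k = (if k \<in> s ` {..n} then hh k else 1 - hh k)" for k
  have sle: "s l \<le> a" if "l \<le> n" for l using smono_le[OF sm that] unfolding a_def by simp
  have "{1..b} = insert b ({1..<Suc a} \<union> {Suc a..<b})" using ab a1 by auto
  then have "prod f {1..b} = f b * prod f ({1..<Suc a} \<union> {Suc a..<b})"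
    by (simp only:) (rule prod.insert, use ab in auto)
  also have "prod f ({1..<Suc a} \<union> {Suc a..<b}) = prod f {1..<Suc a} * prod f {Suc a..<b}"
    by (rule prod.union_disjoint) auto
  also have "f b = hh b" unfolding f_def b_def by auto
  also have "prod f {1..<Suc a} = prod g {1..a}"
  proof -
    have "f k = g k" if "k \<in> {1..a}" for k
    proof -
      have "k \<noteq> s (Suc n)" using that ab unfolding b_def by auto
      then have "k \<in> s ` {..Suc n} \<longleftrightarrow> k \<in> s ` {..n}" by (auto simp: le_Suc_eq)
      then show ?thesis unfolding f_def g_def by simp
    qed
    then show ?thesis by (simp add: atLeastLessThanSuc_atLeastAtMost)
  qed
  also have "prod f {Suc a..<b} = (\<Prod>k\<in>{Suc a..<b}. 1 - hh k)"
  proof (intro prod.cong refl)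
    fix k assume k: "k \<in> {Suc a..<b}"
    have "k \<notin> s ` {..Suc n}"
    proof
      assume "k \<in> s ` {..Suc n}"
      then obtain l where l: "l \<le> Suc n" "k = s l" by auto
      show False
      proof (cases "l = Suc n")
        case True then show False using k l unfolding b_def by auto
      next
        case False then have "l \<le> n" using l by simp
        then show False using sle k l by fastforce
      qed
    qed
    then show "f k = 1 - hh k" unfolding f_def by simp
  qed
  also have "(\<Prod>k\<in>{Suc a..<b}. 1 - hh k) = tail p0 b / tail p0 (Suc a)" by (rule hprod_tail[OF ab])
  also have "prod g {1..a} = p0 (s 0) * (\<Prod>k<n. strict_record_matrix p0 (s k) (s (Suc k)))"
    unfolding g_def a_def using Suc.IH smono_Suc[OF sm] Suc.prems(2) by simp
  also have "hh b = p0 b / tail p0 b" using hh_formula[of b] ab a1 by simp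
  finally have "prod f {1..b} = p0 b / tail p0 b * (p0 (s 0) * (\<Prod>k<n. strict_record_matrix p0 (s k) (s (Suc k))) * (tail p0 b / tail p0 (Suc a)))" .
  also have "\<dots> = p0 (s 0) * (\<Prod>k<n. strict_record_matrix p0 (s k) (s (Suc k))) * (p0 b / tail p0 (Suc a))"
    using tail_pos[of b] by (simp add: field_simps)
  also have "p0 b / tail p0 (Suc a) = strict_record_matrix p0 (s n) (s (Suc n))"
    unfolding strict_record_matrix_def a_def b_def using ab unfolding a_def b_def by simp
  finally show ?case unfolding f_def b_def by (simp add: mult.assoc)
qed

lemma jump_law: "markov_chain_law M (jump_chain Q) p0 (strict_record_matrix p0)"
  unfolding markov_chain_law_def
proof (intro allI)
  fix n and s :: "nat \<Rightarrow> nat"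
  have "prob {\<omega> \<in> space M. \<forall>k\<le>n. jump_chain Q k \<omega> = s k} = prob (W1 n s)"
    using prob_Wset unfolding Wset_def .
  also have "\<dots> = p0 (s 0) * (\<Prod>k<n. strict_record_matrix p0 (s k) (s (Suc k)))"
  proof (cases "smono n s \<and> s 0 \<ge> 1")
    case True
    then show ?thesis using W1_prob_A alg by simp
  next
    case False
    then have "W1 n s = {}" by (rule W1_empty)
    moreover have "p0 (s 0) * (\<Prod>k<n. strict_record_matrix p0 (s k) (s (Suc k))) = 0"
    proof (cases "s 0 = 0")
      case True then show ?thesis using p0_zero by simp
    next
      case False
      then have "\<not> smono n s" using \<open>\<not> (smono n s \<and> s 0 \<ge> 1)\<close> by simp
      then obtain k where "k < n" "\<not> s k < s (Suc k)" unfolding smono_def by auto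
      then have "strict_record_matrix p0 (s k) (s (Suc k)) = 0" unfolding strict_record_matrix_def by simp
      then have "(\<Prod>k<n. strict_record_matrix p0 (s k) (s (Suc k))) = 0"
        using \<open>k < n\<close> by (intro prod_zero) auto
      then show ?thesis by simp
    qed
    ultimately show ?thesis by simp
  qed
  finally show "prob {\<omega> \<in> space M. \<forall>k\<le>n. jump_chain Q k \<omega> = s k} = p0 (s 0) * (\<Prod>k<n. strict_record_matrix p0 (s k) (s (Suc k)))" .
qed


lemma final:
  shows
    "(\<forall>j\<ge>1. hit_prob M Q j = p0 j / tail p0 j)
     \<and> (\<lambda>n. \<Prod>j\<in>{1..n}. 1 - hit_prob M Q j) \<longlonglongrightarrow> 0
     \<and> (\<forall>i\<ge>1. p i i < 1)
     \<and> (\<forall>i\<ge>1. \<forall>j>i.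
          p i j = (1 - p i i) * hit_prob M Q j * (\<Prod>k\<in>{i+1..<j}. 1 - hit_prob M Q k)
        \<and> p i j = (1 - p i i) * p0 j / tail p0 (i + 1))
     \<and> (((\<forall>i\<ge>1. p i i = hit_prob M Q i)
           \<longleftrightarrow> (\<forall>j\<ge>1. \<exists>q. 0 \<le> q \<and> q < 1 \<and>
                 (\<forall>n::nat. measure M {\<omega> \<in> space M. visits Q j \<omega> = enat n} = (1 - q) * q ^ n)))
        \<and> ((\<forall>i\<ge>1. p i i = hit_prob M Q i)
           \<longleftrightarrow> markov_chain_law M Q p0 (weak_record_matrix p0)))
     \<and> (((\<forall>i\<ge>1. p i i = 0)
           \<longleftrightarrow> (\<forall>j\<ge>1. measure M {\<omega> \<in> space M. visits Q j \<omega> \<le> 1} = 1))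
        \<and> ((\<forall>i\<ge>1. p i i = 0)
           \<longleftrightarrow> markov_chain_law M Q p0 (strict_record_matrix p0)))
     \<and> markov_chain_law M (jump_chain Q) p0 (strict_record_matrix p0)"
proof -
  have t: "\<forall>i\<ge>1. \<forall>j>i.
          p i j = (1 - p i i) * hit_prob M Q j * (\<Prod>k\<in>{i+1..<j}. 1 - hit_prob M Q k)
        \<and> p i j = (1 - p i i) * p0 j / tail p0 (i + 1)"
    using pij_formula pij_formula2 by simp
  show ?thesis
    using hh_formula hh_prod_lim pii_lt1 t geom_iff weak_iff bern_iff strict_iff jump_law by blast
qed

end

theorem mainTheorem11:
  fixes M :: "'a measure" and Q :: "nat \<Rightarrow> 'a \<Rightarrow> nat"
    and p0 :: "nat \<Rightarrow> real" and p :: "nat \<Rightarrow> nat \<Rightarrow> real"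
  assumes M: "prob_space M"
    and Q_meas: "\<And>k. Q k \<in> measurable M (count_space UNIV)"
    and Q_pos: "\<And>k \<omega>. \<omega> \<in> space M \<Longrightarrow> Q k \<omega> \<ge> 1"
    and p0_nonneg: "\<And>j. p0 j \<ge> 0"
    and p0_zero: "p0 0 = 0"
    and p0_sums: "p0 sums 1"
    and p0_inf: "infinite {j. p0 j > 0}"
    and p_nonneg: "\<And>i j. i \<ge> 1 \<Longrightarrow> p i j \<ge> 0"
    and p_sums: "\<And>i. i \<ge> 1 \<Longrightarrow> (\<lambda>j. p i j) sums 1"
    and p_incr: "\<And>i j. i \<ge> 1 \<Longrightarrow> j < i \<Longrightarrow> p i j = 0"
    and markov: "markov_chain_law M Q p0 p"
    and G_fin: "\<And>j. j \<ge> 1 \<Longrightarrow> measure M {\<omega> \<in> space M. visits Q j \<omega> < \<infinity>} = 1"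
    and G_pos: "\<And>j. j \<ge> 1 \<Longrightarrow> measure M {\<omega> \<in> space M. visits Q j \<omega> = 0} < 1"
    and G_indep: "prob_space.indep_vars M (\<lambda>_. count_space UNIV) (\<lambda>j. visits Q j) {1..}"
  shows
    "(\<forall>j\<ge>1. hit_prob M Q j = p0 j / tail p0 j)
     \<and> (\<lambda>n. \<Prod>j\<in>{1..n}. 1 - hit_prob M Q j) \<longlonglongrightarrow> 0
     \<and> (\<forall>i\<ge>1. p i i < 1)
     \<and> (\<forall>i\<ge>1. \<forall>j>i.
          p i j = (1 - p i i) * hit_prob M Q j * (\<Prod>k\<in>{i+1..<j}. 1 - hit_prob M Q k)
        \<and> p i j = (1 - p i i) * p0 j / tail p0 (i + 1))
     \<and> (((\<forall>i\<ge>1. p i i = hit_prob M Q i)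
           \<longleftrightarrow> (\<forall>j\<ge>1. \<exists>q. 0 \<le> q \<and> q < 1 \<and>
                 (\<forall>n::nat. measure M {\<omega> \<in> space M. visits Q j \<omega> = enat n} = (1 - q) * q ^ n)))
        \<and> ((\<forall>i\<ge>1. p i i = hit_prob M Q i)
           \<longleftrightarrow> markov_chain_law M Q p0 (weak_record_matrix p0)))
     \<and> (((\<forall>i\<ge>1. p i i = 0)
           \<longleftrightarrow> (\<forall>j\<ge>1. measure M {\<omega> \<in> space M. visits Q j \<omega> \<le> 1} = 1))
        \<and> ((\<forall>i\<ge>1. p i i = 0)
           \<longleftrightarrow> markov_chain_law M Q p0 (strict_record_matrix p0)))
     \<and> markov_chain_law M (jump_chain Q) p0 (strict_record_matrix p0)"
proof -
  have "rc M Q p0 p"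
    unfolding rc_def rc_axioms_def using assms by blast
  then show ?thesis by (rule rc.final)
qed


end
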